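(* Let $d$ be even and suppose the channel is the quasi-static Rayleigh fading channel with zero-forcing equalization: given $W^{(l_0)}=(\mathbf I_d,\mathbf 0)$, the deployed channel weights are $W'^{(l_0)}=(\mathbf I_d,\,B')$ with $B'=(B'_1,\dots,B'_{d/2})$, $B'_i\in\mathbb R^2$ the real representation $(\mathrm{Re},\mathrm{Im})$ of the complex number $N_i/(\sqrt P H_i)$, where $H_1,\dots,H_{d/2}\sim\mathcal{CN}(0,1)$ and $N_1,\dots,N_{d/2}\sim\mathcal{CN}(0,\sigma_0^2)$ are all mutually independent, $P>0$, and $\gamma=P/\sigma_0^2$. Take the channel-layer metric $d^{(l_0)}((M',B'),(M,B))=d_M(M',M)+\sum_{i=1}^{d/2}\|B'_i-B_i\|_2$, where $d_M$ is any metric on $\mathbb R^{d\times d}$ and $B_i,B'_i\in\mathbb R^2$ are consecutive coordinate pairs. Assume that for every $w\in\mathcal W$ the loss $\ell(w,Z)$, $Z\sim P_Z$, is $\sigma$-sub-Gaussian and that for every $z$, $w\mapsto\ell(w,z)$ is $K$-Lipschitz with respect to $d_{\mathcal W}$. For a data-independent distribution $Q_{\tilde W}$ on $\tilde{\mathcal W}$, $k>0$ and $\lambda>kK$, define the prior $Q_{W'W}$ on $\mathcal W\times\mathcal W$ by: $\tilde W\sim Q_{\tilde W}$, $W^{(l_0)}=(\mathbf I_d,\mathbf 0)$, $W'^{(l)}=W^{(l)}$ for $l\ne l_0$, $M'^{(l_0)}=M^{(l_0)}$, and, conditionally on $W$, $B'^{(l_0)}$ has density $\prod_{i=1}^{d/2}\frac{\lambda^2}{2\pi}e^{-\lambda\|B'^{(l_0)}_i-B^{(l_0)}_i\|_2}$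 on $\mathbb R^d$. Then applying Theorem 1 with this prior and $\lambda=kK+4\sqrt\gamma/\pi$ gives: for every data-independent $Q_{\tilde W}$, every $k>0$ and every $\epsilon\in(0,1)$, with probability at least $1-\epsilon$ over $S\sim P_Z^n$, $$\Delta\le\frac{k\sigma^2}{2n}+\frac{D(P_{\tilde W|S}\|Q_{\tilde W})-\log\epsilon}{k}+\frac{d\pi K}{4\sqrt\gamma}+\frac{d}{2k}\log\frac{\pi^2}{8}.$$
   Context: Setting. Let $\mathcal Z=\mathcal X\times\mathcal Y$ be an instance space with data distribution $P_Z$, and let $S=(Z_1,\dots,Z_n)\sim P_Z^{n}$ be a training set of $n$ i.i.d. samples. An augmented network has $L+1$ layers with weights $W=(W^{(1)},\dots,W^{(L+1)})\in\mathcal W=\mathcal W^{(1)}\times\cdots\times\mathcal W^{(L+1)}$. A distinguished index $l_0$ is the channel layer: $\mathcal W^{(l_0)}=\mathbb R^{d\times d}\times\mathbb R^{d}$, with weights $W^{(l_0)}=(M^{(l_0)},B^{(l_0)})$ acting on a feature $f\in\mathbb R^d$ by $f\mapsto M^{(l_0)}f+B^{(l_0)}$. The other weights $\tilde W=(W^{(l)})_{l\ne l_0}\in\tilde{\mathcal W}=\prod_{l\neq l_0}\mathcal W^{(l)}$ are the learnable weights. A learning algorithm is a Markov kernel $P_{\tilde W|S}$ from $\mathcal Z^n$ to $\tilde{\mathcal W}$; the channel-free training distribution on $\mathcal W$ is $P_{W|S}=P_{\tilde W|S}\otimes\delta_{(\mathbf I_d,\mathbf 0)}$ (channel layer fixed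 to identity matrix and zero bias). A channel is a Markov kernel $P_{W'^{(l_0)}|W^{(l_0)}}$ on $\mathcal W^{(l_0)}$; the deployment kernel $P_{W'|W}$ sets $W'^{(l)}=W^{(l)}$ for all $l\ne l_0$ and draws $W'^{(l_0)}\sim P_{W'^{(l_0)}|W^{(l_0)}}(\cdot\,|\,W^{(l_0)})$ independently of everything else. The joint distribution on $\mathcal W\times\mathcal W$ is $P_{W'W|S}(W',W|S)=P_{W'|W}(W'|W)P_{W|S}(W|S)$, and $P_{W'|S}$ denotes its marginal in $W'$. For a loss $\ell:\mathcal W\times\mathcal Z\to[0,\infty)$ let $L(w)=\mathbb E_{Z\sim P_Z}[\ell(w,Z)]$ and $\hat L(w,S)=\frac1n\sum_{i=1}^n\ell(w,Z_i)$; for a distribution $P$ on $\mathcal W$, $L(P)=\int L(w)P(dw)$ and $\hat L_S(P)=\int\hat L(w,S)P(dw)$. The wireless generalization error is $\Delta=L(P_{W'|S})-\hat L_S(P_{W|S})$. The metric on $\mathcal W$ is $d_{\mathcal W}(W',W)=\sum_{l=1}^{L+1}d^{(l)}(W'^{(l)},W^{(l)})$ where each $d^{(l)}$ is a metric on $\mathcal W^{(l)}$. "$\sigma$-sub-Gaussian" means $\log\mathbb E[e^{\lambda(\ell(w,Z)-L(w))}]\le\lambda^2\sigma^2/2$ for all $\lambda\in\mathbb R$; "$K$-Lipschitz" means $|\ell(w,z)-\ell(w',z)|\le K\,d_{\mathcal W}(w,w')$. "Data-independent" means not depending on $S$. $D(\cdot\|\cdot)$ is the Kullback–Leibler divergence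 (natural logarithm). Theorem 1 is the statement: under the sub-Gaussian and Lipschitz assumptions, for any data-independent distribution $Q_{W'W}$ on $\mathcal W\times\mathcal W$, $k>0$, $\epsilon\in(0,1)$, with probability at least $1-\epsilon$ over $S$, $\Delta\le\frac{k\sigma^2}{2n}+\frac{D(P_{W'W|S}\|Q_{W'W})-\log\epsilon}{k}+\frac1k\log\mathbb E_{Q_{W'W}}[e^{kKd_{\mathcal W}(W',W)}]$. $\mathcal{CN}(0,s^2)$ denotes the circularly symmetric complex Gaussian with $\mathbb E|X|^2=s^2$. *)

theory Defs
  imports "HOL-Probability.Probability"
begin

text \<open>Channel-layer weights W^(l0) = (M, B) in R^(d x d) x R^d, with d = 2 * CARD('m).
  Coordinates of R^d are indexed by 'm x bool; the i-th consecutive pair B_i in R^2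
  is (B$(i,True), B$(i,False)) (real part, imaginary part).\<close>
type_synonym 'm chw = "(real^('m \<times> bool)^('m \<times> bool)) \<times> (real^('m \<times> bool))"

text \<open>Full weight space W = (learnable weights) x (channel layer).\<close>
type_synonym ('w, 'm) fullw = "'w \<times> 'm chw"

definition is_metric :: "('a \<Rightarrow> 'a \<Rightarrow> real) \<Rightarrow> bool" where
  "is_metric dd \<longleftrightarrow> (\<forall>x y. dd x y = 0 \<longleftrightarrow> x = y) \<and> (\<forall>x y. dd x y = dd y x)
     \<and> (\<forall>x y z. dd x z \<le> dd x y + dd y z)"

definition chan_metric :: "(real^('m \<times> bool)^('m \<times> bool) \<Rightarrow> real^('m \<times> bool)^('m \<times> bool) \<Rightarrow> real)
    \<Rightarrow> ('m::finite) chw \<Rightarrow> 'm chw \<Rightarrow> real" where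
  "chan_metric dM c' c = dM (fst c') (fst c)
     + (\<Sum>i\<in>UNIV. sqrt ((snd c' $ (i, True) - snd c $ (i, True))\<^sup>2
                        + (snd c' $ (i, False) - snd c $ (i, False))\<^sup>2))"

definition full_metric :: "('w \<Rightarrow> 'w \<Rightarrow> real) \<Rightarrow> (real^('m \<times> bool)^('m \<times> bool) \<Rightarrow> real^('m \<times> bool)^('m \<times> bool) \<Rightarrow> real)
    \<Rightarrow> ('w, 'm::finite) fullw \<Rightarrow> ('w, 'm) fullw \<Rightarrow> real" where
  "full_metric dW dM w' w = dW (fst w') (fst w) + chan_metric dM (snd w') (snd w)"

definition full_space :: "'w measure \<Rightarrow> ('w, 'm::finite) fullw measure" where
  "full_space Mw = Mw \<Otimes>\<^sub>M (borel :: 'm chw measure)"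

definition sample_space :: "'z measure \<Rightarrow> nat \<Rightarrow> (nat \<Rightarrow> 'z) measure" where
  "sample_space PZ n = PiM {..<n} (\<lambda>_. PZ)"

definition sub_gaussian_loss :: "'z measure \<Rightarrow> ('w \<Rightarrow> 'z \<Rightarrow> real) \<Rightarrow> real \<Rightarrow> bool" where
  "sub_gaussian_loss PZ loss \<sigma> \<longleftrightarrow> (\<forall>w. integrable PZ (loss w) \<and>
     (\<forall>t::real. ln (\<integral>z. exp (t * (loss w z - (\<integral>z'. loss w z' \<partial>PZ))) \<partial>PZ) \<le> t\<^sup>2 * \<sigma>\<^sup>2 / 2
                 \<and> integrable PZ (\<lambda>z. exp (t * (loss w z - (\<integral>z'. loss w z' \<partial>PZ))))))"

definition lipschitz_loss :: "('w \<Rightarrow> 'w \<Rightarrow> real) \<Rightarrow> ('w \<Rightarrow> 'z \<Rightarrow> real) \<Rightarrow> real \<Rightarrow> bool" where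
  "lipschitz_loss dd loss K \<longleftrightarrow> (\<forall>w w' z. \<bar>loss w z - loss w' z\<bar> \<le> K * dd w w')"

definition pop_risk :: "'z measure \<Rightarrow> ('w \<Rightarrow> 'z \<Rightarrow> real) \<Rightarrow> 'w \<Rightarrow> real" where
  "pop_risk PZ loss w = (\<integral>z. loss w z \<partial>PZ)"

definition emp_risk :: "('w \<Rightarrow> 'z \<Rightarrow> real) \<Rightarrow> nat \<Rightarrow> (nat \<Rightarrow> 'z) \<Rightarrow> 'w \<Rightarrow> real" where
  "emp_risk loss n S w = (\<Sum>i<n. loss w (S i)) / real n"

definition ext_integral :: "'a measure \<Rightarrow> ('a \<Rightarrow> real) \<Rightarrow> ereal" where
  "ext_integral M f = enn2ereal (\<integral>\<^sup>+x. ennreal (f x) \<partial>M) - enn2ereal (\<integral>\<^sup>+x. ennreal (- f x) \<partial>M)"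

definition KL_div :: "'a measure \<Rightarrow> 'a measure \<Rightarrow> ereal" where
  "KL_div P Q = (if absolutely_continuous Q P
      then ext_integral P (\<lambda>x. ln (enn2real (RN_deriv Q P x))) else \<infinity>)"

text \<open>Circularly symmetric complex Gaussian CN(0, s^2): independent real and imaginary
  parts, each N(0, s^2/2).\<close>
definition CN_gauss :: "real \<Rightarrow> complex measure" where
  "CN_gauss s2 = distr (density lborel (normal_density 0 (sqrt (s2 / 2)))
                     \<Otimes>\<^sub>M density lborel (normal_density 0 (sqrt (s2 / 2))))
                   borel (\<lambda>(x, y). Complex x y)"

definition rayleigh_bias :: "real \<Rightarrow> real \<Rightarrow> (real^('m::finite \<times> bool)) measure" where
  "rayleigh_bias Pw \<sigma>0 = distr (PiM UNIV (\<lambda>_::'m. CN_gauss 1) \<Otimes>\<^sub>M PiM UNIV (\<lambda>_::'m. CN_gauss (\<sigma>0\<^sup>2)))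
      borel (\<lambda>(h, nz). \<chi> ib. (if snd ib then Re else Im) (nz (fst ib) / (complex_of_real (sqrt Pw) * h (fst ib))))"

definition joint_deploy :: "'w measure \<Rightarrow> 'w measure \<Rightarrow> real \<Rightarrow> real
     \<Rightarrow> (('w, 'm::finite) fullw \<times> ('w, 'm) fullw) measure" where
  "joint_deploy Mw PWS Pw \<sigma>0 = distr (PWS \<Otimes>\<^sub>M rayleigh_bias Pw \<sigma>0)
      (full_space Mw \<Otimes>\<^sub>M full_space Mw)
      (\<lambda>(w, b). ((w, (mat 1, b)), (w, (mat 1, 0))))"

definition wireless_gen_err :: "'z measure \<Rightarrow> (('w, 'm::finite) fullw \<Rightarrow> 'z \<Rightarrow> real) \<Rightarrow> nat
     \<Rightarrow> (nat \<Rightarrow> 'z) \<Rightarrow> 'w measure \<Rightarrow> 'w measure \<Rightarrow> real \<Rightarrow> real \<Rightarrow> ereal" where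
  "wireless_gen_err PZ loss n S Mw PWS Pw \<sigma>0 =
     ext_integral (joint_deploy Mw PWS Pw \<sigma>0)
       (\<lambda>(w', w). pop_risk PZ loss w' - emp_risk loss n S w)"

end

theory Submission
  imports Defs
begin

lemma arctan_nn_integral: "(\<integral>\<^sup>+s. ennreal (1 / (1 + s\<^sup>2)) \<partial>lborel) = ennreal pi"
proof -
  note F = interval_integral_FTC_nonneg[where F=arctan and f="\<lambda>s. 1 / (1 + s\<^sup>2)"
     and A="-pi/2" and B="pi/2" and a="-\<infinity>" and b="\<infinity>"]
  have a1: "((arctan \<circ> real_of_ereal) \<longlongrightarrow> -pi/2) (at_right (-\<infinity>))"
    by (simp add: ereal_tendsto_simps1 tendsto_arctan_at_bot)
  have a2: "((arctan \<circ> real_of_ereal) \<longlongrightarrow> pi/2) (at_left \<infinity>)"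
    by (simp add: ereal_tendsto_simps1 tendsto_arctan_at_top)
  have d: "\<And>x. DERIV arctan x :> 1 / (1 + x\<^sup>2)"
    by (auto intro!: derivative_eq_intros simp: field_simps power2_eq_square add_nonneg_eq_0_iff)
  have c: "\<And>x::real. isCont (\<lambda>s. 1 / (1 + s\<^sup>2)) x"
    by (auto intro!: continuous_intros simp: add_nonneg_eq_0_iff add_pos_nonneg)
  have n: "AE x in lborel. -\<infinity> < ereal x \<longrightarrow> ereal x < \<infinity> \<longrightarrow> 0 \<le> 1 / (1 + x\<^sup>2)"
    by (auto simp: add_pos_nonneg)
  note F = F[OF _ d c n a1 a2]
  have i: "integrable lborel (\<lambda>s::real. 1 / (1 + s\<^sup>2))"
    using F(1) by (simp add: set_integrable_def)
  have v: "(\<integral>s. 1 / (1 + s\<^sup>2) \<partial>lborel) = pi"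
    using F(2) by (simp add: interval_lebesgue_integral_def set_lebesgue_integral_def)
  show ?thesis
    using nn_integral_eq_integral[OF i] v by (simp add: add_pos_nonneg)
qed

lemma gauss_mom:
  fixes \<rho> :: real assumes "\<rho> > 0"
  shows "(\<integral>\<^sup>+x. ennreal (exp (- x\<^sup>2 / (2 * \<rho>\<^sup>2))) \<partial>lborel) = ennreal (sqrt (2 * pi) * \<rho>)"
    and "(\<integral>\<^sup>+x. ennreal (x\<^sup>2 * exp (- x\<^sup>2 / (2 * \<rho>\<^sup>2))) \<partial>lborel) = ennreal (sqrt (2 * pi) * \<rho> ^ 3)"
proof -
  have e: "exp (- x\<^sup>2 / (2 * \<rho>\<^sup>2)) = sqrt (2 * pi * \<rho>\<^sup>2) * normal_density 0 \<rho> x" for x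
    using assms by (simp add: normal_density_def)
  have s: "sqrt (2 * pi * \<rho>\<^sup>2) = sqrt (2 * pi) * \<rho>"
    using assms by (simp add: real_sqrt_mult)
  have m0: "has_bochner_integral lborel (\<lambda>x. normal_density 0 \<rho> x) 1"
    using normal_moment_even[OF assms, of 0 0] by simp
  have m2: "has_bochner_integral lborel (\<lambda>x. normal_density 0 \<rho> x * x\<^sup>2) (\<rho>\<^sup>2)"
    using normal_moment_even[OF assms, of 0 1] assms by (simp add: power2_eq_square)
  have m0': "has_bochner_integral lborel (\<lambda>x. exp (- x\<^sup>2 / (2 * \<rho>\<^sup>2))) (sqrt (2 * pi) * \<rho>)"
    using has_bochner_integral_mult_right[OF m0, of "sqrt (2 * pi * \<rho>\<^sup>2)"] unfolding e s by simp
  have m2': "has_bochner_integral lborel (\<lambda>x. x\<^sup>2 * exp (- x\<^sup>2 / (2 * \<rho>\<^sup>2))) (sqrt (2 * pi) * \<rho> ^ 3)"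
    using has_bochner_integral_mult_right[OF m2, of "sqrt (2 * pi * \<rho>\<^sup>2)"] unfolding e s
    by (simp add: ac_simps power2_eq_square power3_eq_cube)
  show "(\<integral>\<^sup>+x. ennreal (exp (- x\<^sup>2 / (2 * \<rho>\<^sup>2))) \<partial>lborel) = ennreal (sqrt (2 * pi) * \<rho>)"
    using m0' nn_integral_eq_integral[of lborel "\<lambda>x. exp (- x\<^sup>2 / (2 * \<rho>\<^sup>2))"]
    by (simp add: has_bochner_integral_iff)
  show "(\<integral>\<^sup>+x. ennreal (x\<^sup>2 * exp (- x\<^sup>2 / (2 * \<rho>\<^sup>2))) \<partial>lborel) = ennreal (sqrt (2 * pi) * \<rho> ^ 3)"
    using m2' nn_integral_eq_integral[of lborel "\<lambda>x. x\<^sup>2 * exp (- x\<^sup>2 / (2 * \<rho>\<^sup>2))"]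
    by (simp add: has_bochner_integral_iff)
qed

lemma nd_prod: "normal_density 0 \<tau> x * normal_density 0 \<tau> y = exp (- (x\<^sup>2 + y\<^sup>2) / (2 * \<tau>\<^sup>2)) / (2 * pi * \<tau>\<^sup>2)"
  if "\<tau> > 0" for \<tau> x y :: real
proof -
  have "sqrt (2 * pi * \<tau>\<^sup>2) * sqrt (2 * pi * \<tau>\<^sup>2) = 2 * pi * \<tau>\<^sup>2" by simp
  then show ?thesis
    unfolding normal_density_def by (simp add: field_simps exp_add[symmetric] diff_divide_distrib add_divide_distrib)
qed

lemma rho_eq: "x\<^sup>2 + (x * s)\<^sup>2 = x\<^sup>2 * (1 + s\<^sup>2)" for x s :: real
  by (simp add: algebra_simps power2_eq_square)

lemma gauss2_abs:
  fixes \<tau> :: real assumes \<tau>: "\<tau> > 0"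
  shows "(\<integral>\<^sup>+x. \<integral>\<^sup>+y. ennreal (normal_density 0 \<tau> x * normal_density 0 \<tau> y * sqrt (x\<^sup>2 + y\<^sup>2)) \<partial>lborel \<partial>lborel)
         = ennreal (sqrt (2 * pi) * \<tau> / 2)"
proof -
  define \<rho> where "\<rho> s = \<tau> / sqrt (1 + s\<^sup>2)" for s :: real
  have \<rho>pos: "\<rho> s > 0" for s unfolding \<rho>_def using \<tau> by (simp add: add_pos_nonneg)
  have \<rho>sq: "(\<rho> s)\<^sup>2 = \<tau>\<^sup>2 / (1 + s\<^sup>2)" for s
    unfolding \<rho>_def by (simp add: power_divide add_nonneg_nonneg)
  let ?c = "1 / (2 * pi * \<tau>\<^sup>2)"
  have step1: "(\<integral>\<^sup>+y. ennreal (normal_density 0 \<tau> x * normal_density 0 \<tau> y * sqrt (x\<^sup>2 + y\<^sup>2)) \<partial>lborel)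
      = (\<integral>\<^sup>+s. ennreal (?c * sqrt (1 + s\<^sup>2) * (x\<^sup>2 * exp (- x\<^sup>2 / (2 * (\<rho> s)\<^sup>2)))) \<partial>lborel)"
    if "x \<noteq> 0" for x
  proof -
    have "(\<integral>\<^sup>+y. ennreal (normal_density 0 \<tau> x * normal_density 0 \<tau> y * sqrt (x\<^sup>2 + y\<^sup>2)) \<partial>lborel)
       = ennreal \<bar>x\<bar> * (\<integral>\<^sup>+s. ennreal (normal_density 0 \<tau> x * normal_density 0 \<tau> (0 + x * s) * sqrt (x\<^sup>2 + (0 + x * s)\<^sup>2)) \<partial>lborel)"
      by (rule nn_integral_real_affine) (use that in auto)
    also have "\<dots> = (\<integral>\<^sup>+s. ennreal (\<bar>x\<bar> * (normal_density 0 \<tau> x * normal_density 0 \<tau> (x * s) * sqrt (x\<^sup>2 + (x * s)\<^sup>2))) \<partial>lborel)"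
      by (subst nn_integral_cmult[symmetric]) (auto simp: ennreal_mult)
    also have "\<dots> = (\<integral>\<^sup>+s. ennreal (?c * sqrt (1 + s\<^sup>2) * (x\<^sup>2 * exp (- x\<^sup>2 / (2 * (\<rho> s)\<^sup>2)))) \<partial>lborel)"
    proof (intro nn_integral_cong arg_cong[where f=ennreal])
      fix s :: real
      have a: "sqrt (x\<^sup>2 + (x * s)\<^sup>2) = \<bar>x\<bar> * sqrt (1 + s\<^sup>2)"
        unfolding rho_eq by (simp add: real_sqrt_mult)
      have b: "- (x\<^sup>2 + (x * s)\<^sup>2) / (2 * \<tau>\<^sup>2) = - x\<^sup>2 / (2 * (\<rho> s)\<^sup>2)"
        unfolding rho_eq \<rho>sq using \<tau> by (simp add: field_simps add_pos_nonneg)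
      show "\<bar>x\<bar> * (normal_density 0 \<tau> x * normal_density 0 \<tau> (x * s) * sqrt (x\<^sup>2 + (x * s)\<^sup>2))
          = ?c * sqrt (1 + s\<^sup>2) * (x\<^sup>2 * exp (- x\<^sup>2 / (2 * (\<rho> s)\<^sup>2)))"
        unfolding nd_prod[OF \<tau>] a b by (simp add: field_simps abs_mult_self_eq power2_eq_square)
    qed
    finally show ?thesis .
  qed
  have "(\<integral>\<^sup>+x. \<integral>\<^sup>+y. ennreal (normal_density 0 \<tau> x * normal_density 0 \<tau> y * sqrt (x\<^sup>2 + y\<^sup>2)) \<partial>lborel \<partial>lborel)
     = (\<integral>\<^sup>+x. \<integral>\<^sup>+s. ennreal (?c * sqrt (1 + s\<^sup>2) * (x\<^sup>2 * exp (- x\<^sup>2 / (2 * (\<rho> s)\<^sup>2)))) \<partial>lborel \<partial>lborel)"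
  proof (rule nn_integral_cong_AE)
    show "AE x in lborel. (\<integral>\<^sup>+y. ennreal (normal_density 0 \<tau> x * normal_density 0 \<tau> y * sqrt (x\<^sup>2 + y\<^sup>2)) \<partial>lborel)
      = (\<integral>\<^sup>+s. ennreal (?c * sqrt (1 + s\<^sup>2) * (x\<^sup>2 * exp (- x\<^sup>2 / (2 * (\<rho> s)\<^sup>2)))) \<partial>lborel)"
      using AE_lborel_singleton[of 0] by eventually_elim (rule step1)
  qed
  also have "\<dots> = (\<integral>\<^sup>+s. \<integral>\<^sup>+x. ennreal (?c * sqrt (1 + s\<^sup>2) * (x\<^sup>2 * exp (- x\<^sup>2 / (2 * (\<rho> s)\<^sup>2)))) \<partial>lborel \<partial>lborel)"
    by (rule lborel_pair.Fubini') (simp add: \<rho>_def)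
  also have "\<dots> = (\<integral>\<^sup>+s. ennreal (?c * sqrt (1 + s\<^sup>2)) * ennreal (sqrt (2 * pi) * (\<rho> s) ^ 3) \<partial>lborel)"
    by (intro nn_integral_cong, subst ennreal_mult', simp,
        subst nn_integral_cmult, simp, subst gauss_mom(2)[OF \<rho>pos], rule refl)
  also have "\<dots> = (\<integral>\<^sup>+s. ennreal (sqrt (2 * pi) * \<tau> / (2 * pi)) * ennreal (1 / (1 + s\<^sup>2)) \<partial>lborel)"
  proof (intro nn_integral_cong)
    fix s :: real
    have p: "1 + s\<^sup>2 > 0" by (simp add: add_pos_nonneg)
    have "(\<rho> s) ^ 3 = \<tau> ^ 3 / (sqrt (1 + s\<^sup>2) * (1 + s\<^sup>2))"
      unfolding \<rho>_def using p by (simp add: power3_eq_cube field_simps)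
    moreover have "\<And>u q K. u > 0 \<Longrightarrow> q > 0 \<Longrightarrow> 1 / (2 * pi * \<tau>\<^sup>2) * u * (K * (\<tau> ^ 3 / (u * q))) = K * \<tau> / (2 * pi) * (1 / q)"
      using \<tau> pi_gt_zero by (simp add: field_simps power2_eq_square power3_eq_cube)
    ultimately have "?c * sqrt (1 + s\<^sup>2) * (sqrt (2 * pi) * (\<rho> s) ^ 3) = sqrt (2 * pi) * \<tau> / (2 * pi) * (1 / (1 + s\<^sup>2))"
      using p by simp
    then show "ennreal (?c * sqrt (1 + s\<^sup>2)) * ennreal (sqrt (2 * pi) * (\<rho> s) ^ 3)
        = ennreal (sqrt (2 * pi) * \<tau> / (2 * pi)) * ennreal (1 / (1 + s\<^sup>2))"
      using \<tau> \<rho>pos[of s] by (simp add: ennreal_mult[symmetric])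
  qed
  also have "\<dots> = ennreal (sqrt (2 * pi) * \<tau> / (2 * pi)) * ennreal pi"
    by (subst nn_integral_cmult) (auto simp: arctan_nn_integral)
  also have "\<dots> = ennreal (sqrt (2 * pi) * \<tau> / 2)"
    using \<tau> by (simp add: ennreal_mult[symmetric])
  finally show ?thesis .
qed

lemma gauss2_inv:
  fixes \<tau> :: real assumes \<tau>: "\<tau> > 0"
  shows "(\<integral>\<^sup>+x. \<integral>\<^sup>+y. ennreal (normal_density 0 \<tau> x * normal_density 0 \<tau> y * (1 / sqrt (x\<^sup>2 + y\<^sup>2))) \<partial>lborel \<partial>lborel)
         = ennreal (sqrt (2 * pi) / (2 * \<tau>))"
proof -
  define \<rho> where "\<rho> s = \<tau> / sqrt (1 + s\<^sup>2)" for s :: real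
  have \<rho>pos: "\<rho> s > 0" for s unfolding \<rho>_def using \<tau> by (simp add: add_pos_nonneg)
  have \<rho>sq: "(\<rho> s)\<^sup>2 = \<tau>\<^sup>2 / (1 + s\<^sup>2)" for s
    unfolding \<rho>_def by (simp add: power_divide add_nonneg_nonneg)
  let ?c = "1 / (2 * pi * \<tau>\<^sup>2)"
  have step1: "(\<integral>\<^sup>+y. ennreal (normal_density 0 \<tau> x * normal_density 0 \<tau> y * (1 / sqrt (x\<^sup>2 + y\<^sup>2))) \<partial>lborel)
      = (\<integral>\<^sup>+s. ennreal (?c * (1 / sqrt (1 + s\<^sup>2)) * exp (- x\<^sup>2 / (2 * (\<rho> s)\<^sup>2))) \<partial>lborel)"
    if "x \<noteq> 0" for x
  proof -
    have "(\<integral>\<^sup>+y. ennreal (normal_density 0 \<tau> x * normal_density 0 \<tau> y * (1 / sqrt (x\<^sup>2 + y\<^sup>2))) \<partial>lborel)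
       = ennreal \<bar>x\<bar> * (\<integral>\<^sup>+s. ennreal (normal_density 0 \<tau> x * normal_density 0 \<tau> (0 + x * s) * (1 / sqrt (x\<^sup>2 + (0 + x * s)\<^sup>2))) \<partial>lborel)"
      by (rule nn_integral_real_affine) (use that in auto)
    also have "\<dots> = (\<integral>\<^sup>+s. ennreal (\<bar>x\<bar> * (normal_density 0 \<tau> x * normal_density 0 \<tau> (x * s) * (1 / sqrt (x\<^sup>2 + (x * s)\<^sup>2)))) \<partial>lborel)"
      by (subst nn_integral_cmult[symmetric]) (auto simp: ennreal_mult'[symmetric] times_divide_eq_right[symmetric] simp del: times_divide_eq_right intro!: nn_integral_cong)
    also have "\<dots> = (\<integral>\<^sup>+s. ennreal (?c * (1 / sqrt (1 + s\<^sup>2)) * exp (- x\<^sup>2 / (2 * (\<rho> s)\<^sup>2))) \<partial>lborel)"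
    proof (intro nn_integral_cong arg_cong[where f=ennreal])
      fix s :: real
      have a: "sqrt (x\<^sup>2 + (x * s)\<^sup>2) = \<bar>x\<bar> * sqrt (1 + s\<^sup>2)"
        unfolding rho_eq by (simp add: real_sqrt_mult)
      have b: "- (x\<^sup>2 + (x * s)\<^sup>2) / (2 * \<tau>\<^sup>2) = - x\<^sup>2 / (2 * (\<rho> s)\<^sup>2)"
        unfolding rho_eq \<rho>sq using \<tau> by (simp add: field_simps add_pos_nonneg)
      show "\<bar>x\<bar> * (normal_density 0 \<tau> x * normal_density 0 \<tau> (x * s) * (1 / sqrt (x\<^sup>2 + (x * s)\<^sup>2)))
          = ?c * (1 / sqrt (1 + s\<^sup>2)) * exp (- x\<^sup>2 / (2 * (\<rho> s)\<^sup>2))"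
        unfolding nd_prod[OF \<tau>] a b using that by (simp add: field_simps)
    qed
    finally show ?thesis .
  qed
  have "(\<integral>\<^sup>+x. \<integral>\<^sup>+y. ennreal (normal_density 0 \<tau> x * normal_density 0 \<tau> y * (1 / sqrt (x\<^sup>2 + y\<^sup>2))) \<partial>lborel \<partial>lborel)
     = (\<integral>\<^sup>+x. \<integral>\<^sup>+s. ennreal (?c * (1 / sqrt (1 + s\<^sup>2)) * exp (- x\<^sup>2 / (2 * (\<rho> s)\<^sup>2))) \<partial>lborel \<partial>lborel)"
  proof (rule nn_integral_cong_AE)
    show "AE x in lborel. (\<integral>\<^sup>+y. ennreal (normal_density 0 \<tau> x * normal_density 0 \<tau> y * (1 / sqrt (x\<^sup>2 + y\<^sup>2))) \<partial>lborel)
      = (\<integral>\<^sup>+s. ennreal (?c * (1 / sqrt (1 + s\<^sup>2)) * exp (- x\<^sup>2 / (2 * (\<rho> s)\<^sup>2))) \<partial>lborel)"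
      using AE_lborel_singleton[of 0] by eventually_elim (rule step1)
  qed
  also have "\<dots> = (\<integral>\<^sup>+s. \<integral>\<^sup>+x. ennreal (?c * (1 / sqrt (1 + s\<^sup>2)) * exp (- x\<^sup>2 / (2 * (\<rho> s)\<^sup>2))) \<partial>lborel \<partial>lborel)"
    by (rule lborel_pair.Fubini') (simp add: \<rho>_def)
  also have "\<dots> = (\<integral>\<^sup>+s. ennreal (?c * (1 / sqrt (1 + s\<^sup>2))) * ennreal (sqrt (2 * pi) * \<rho> s) \<partial>lborel)"
    by (intro nn_integral_cong, subst ennreal_mult', simp,
        subst nn_integral_cmult, simp, subst gauss_mom(1)[OF \<rho>pos], rule refl)
  also have "\<dots> = (\<integral>\<^sup>+s. ennreal (sqrt (2 * pi) / (2 * pi * \<tau>)) * ennreal (1 / (1 + s\<^sup>2)) \<partial>lborel)"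
  proof (intro nn_integral_cong)
    fix s :: real
    have p: "1 + s\<^sup>2 > 0" by (simp add: add_pos_nonneg)
    have u: "sqrt (1 + s\<^sup>2) * sqrt (1 + s\<^sup>2) = 1 + s\<^sup>2" using p by simp
    have "\<And>u q K. u > 0 \<Longrightarrow> u * u = q \<Longrightarrow> 1 / (2 * pi * \<tau>\<^sup>2) * (1 / u) * (K * (\<tau> / u)) = K / (2 * pi * \<tau>) * (1 / q)"
      using \<tau> pi_gt_zero by (simp add: field_simps power2_eq_square)
    from this[OF _ u] have "?c * (1 / sqrt (1 + s\<^sup>2)) * (sqrt (2 * pi) * \<rho> s) = sqrt (2 * pi) / (2 * pi * \<tau>) * (1 / (1 + s\<^sup>2))"
      using p unfolding \<rho>_def by simp
    then show "ennreal (?c * (1 / sqrt (1 + s\<^sup>2))) * ennreal (sqrt (2 * pi) * \<rho> s)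
        = ennreal (sqrt (2 * pi) / (2 * pi * \<tau>)) * ennreal (1 / (1 + s\<^sup>2))"
      using \<tau> \<rho>pos[of s] by (simp add: ennreal_mult[symmetric])
  qed
  also have "\<dots> = ennreal (sqrt (2 * pi) / (2 * pi * \<tau>)) * ennreal pi"
    by (subst nn_integral_cmult) (auto simp: arctan_nn_integral)
  also have "\<dots> = ennreal (sqrt (2 * pi) / (2 * \<tau>))"
    using \<tau> by (simp add: ennreal_mult[symmetric])
  finally show ?thesis .
qed

lemma e3: "0 \<le> a \<Longrightarrow> 0 \<le> b \<Longrightarrow> 0 \<le> c \<Longrightarrow> ennreal a * (ennreal b * ennreal c) = ennreal (a * b * c)"
  by (simp add: ennreal_mult mult.assoc)

lemma CN_nn_integral:
  assumes s2: "s2 > 0" and f: "f \<in> borel_measurable borel"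
  shows "(\<integral>\<^sup>+z. f z \<partial>CN_gauss s2) =
    (\<integral>\<^sup>+x. \<integral>\<^sup>+y. ennreal (normal_density 0 (sqrt (s2 / 2)) x) * (ennreal (normal_density 0 (sqrt (s2 / 2)) y) * f (Complex x y)) \<partial>lborel \<partial>lborel)"
proof -
  let ?\<tau> = "sqrt (s2 / 2)"
  let ?D = "density lborel (\<lambda>x. ennreal (normal_density 0 ?\<tau> x))"
  have \<tau>: "?\<tau> > 0" using s2 by simp
  interpret D: prob_space ?D by (rule prob_space_normal_density[OF \<tau>])
  interpret DD: pair_prob_space ?D ?D ..
  have cm: "(\<lambda>(x, y). Complex x y) \<in> borel_measurable (?D \<Otimes>\<^sub>M ?D)"
    unfolding Complex_eq by measurable
  have "(\<integral>\<^sup>+z. f z \<partial>CN_gauss s2) = (\<integral>\<^sup>+p. f (case p of (x, y) \<Rightarrow> Complex x y) \<partial>(?D \<Otimes>\<^sub>M ?D))"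
    unfolding CN_gauss_def by (rule nn_integral_distr[OF cm]) (use f in simp)
  also have "\<dots> = (\<integral>\<^sup>+x. \<integral>\<^sup>+y. f (Complex x y) \<partial>?D \<partial>?D)"
    using D.nn_integral_fst[OF measurable_compose[OF cm f]] by simp
  also have "\<dots> = (\<integral>\<^sup>+x. \<integral>\<^sup>+y. ennreal (normal_density 0 ?\<tau> y) * f (Complex x y) \<partial>lborel \<partial>?D)"
    by (intro nn_integral_cong nn_integral_density) (use f in \<open>auto simp: Complex_eq\<close>)
  also have "\<dots> = (\<integral>\<^sup>+x. ennreal (normal_density 0 ?\<tau> x) * (\<integral>\<^sup>+y. ennreal (normal_density 0 ?\<tau> y) * f (Complex x y) \<partial>lborel) \<partial>lborel)"
  proof (rule nn_integral_density)
    have "(\<lambda>(x, y). ennreal (normal_density 0 ?\<tau> y) * f (Complex x y)) \<in> borel_measurable (borel \<Otimes>\<^sub>M lborel)"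
      using f unfolding Complex_eq by measurable
    then show "(\<lambda>x. \<integral>\<^sup>+y. ennreal (normal_density 0 ?\<tau> y) * f (Complex x y) \<partial>lborel) \<in> borel_measurable lborel"
      using lborel.borel_measurable_nn_integral[of "\<lambda>x y. ennreal (normal_density 0 ?\<tau> y) * f (Complex x y)" borel]
      by simp
  qed simp
  also have "\<dots> = (\<integral>\<^sup>+x. \<integral>\<^sup>+y. ennreal (normal_density 0 ?\<tau> x) * (ennreal (normal_density 0 ?\<tau> y) * f (Complex x y)) \<partial>lborel \<partial>lborel)"
    by (intro nn_integral_cong nn_integral_cmult[symmetric]) (use f in \<open>unfold Complex_eq, measurable\<close>)
  finally show ?thesis .
qed

lemma CN_abs:
  assumes s2: "s2 > 0"
  shows "(\<integral>\<^sup>+z. ennreal (cmod z) \<partial>CN_gauss s2) = ennreal (sqrt (2 * pi) * sqrt (s2 / 2) / 2)"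
proof -
  have m: "(\<lambda>z. ennreal (cmod z)) \<in> borel_measurable borel" by measurable
  have \<tau>: "sqrt (s2 / 2) > 0" using s2 by simp
  show ?thesis
    unfolding CN_nn_integral[OF s2 m] gauss2_abs[OF \<tau>, symmetric]
    by (intro nn_integral_cong) (simp only: complex_norm, rule e3, auto)
qed

lemma CN_inv:
  assumes s2: "s2 > 0"
  shows "(\<integral>\<^sup>+z. ennreal (1 / cmod z) \<partial>CN_gauss s2) = ennreal (sqrt (2 * pi) / (2 * sqrt (s2 / 2)))"
proof -
  have m: "(\<lambda>z. ennreal (1 / cmod z)) \<in> borel_measurable borel" by measurable
  have \<tau>: "sqrt (s2 / 2) > 0" using s2 by simp
  show ?thesis
    unfolding CN_nn_integral[OF s2 m] gauss2_inv[OF \<tau>, symmetric]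
    by (intro nn_integral_cong) (simp only: complex_norm, rule e3, auto)
qed

lemma borel_measurable_vec_real:
  fixes f :: "'a \<Rightarrow> real^'n"
  assumes "\<And>i. (\<lambda>x. f x $ i) \<in> borel_measurable M"
  shows "f \<in> borel_measurable M"
proof (rule borel_measurable_euclidean_space[THEN iffD2], intro ballI)
  fix b :: "real^'n" assume "b \<in> Basis"
  then obtain i where b: "b = axis i 1" by (auto simp: Basis_vec_def)
  show "(\<lambda>x. f x \<bullet> b) \<in> borel_measurable M"
    unfolding b inner_axis using assms[of i] by simp
qed

lemma PiM_marg_nn:
  assumes "\<And>i. prob_space (M i)" "i \<in> I" "f \<in> borel_measurable (M i)"
  shows "(\<integral>\<^sup>+x. f (x i) \<partial>PiM I M) = (\<integral>\<^sup>+y. f y \<partial>M i)"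
proof -
  interpret P: product_prob_space M
    by (intro_locales; auto simp: product_sigma_finite_def product_prob_space_axioms_def
         prob_space_imp_sigma_finite assms)
  have "(\<integral>\<^sup>+y. f y \<partial>M i) = (\<integral>\<^sup>+y. f y \<partial>distr (PiM I M) (M i) (\<lambda>x. x i))"
    using P.PiM_component[OF assms(2)] by simp
  also have "\<dots> = (\<integral>\<^sup>+x. f (x i) \<partial>PiM I M)"
    by (rule nn_integral_distr) (use assms in auto)
  finally show ?thesis ..
qed

lemma prob_space_CN: "s2 > 0 \<Longrightarrow> prob_space (CN_gauss s2)"
  unfolding CN_gauss_def
proof -
  assume s2: "s2 > 0"
  let ?D = "density lborel (\<lambda>x. ennreal (normal_density 0 (sqrt (s2 / 2)) x))"
  interpret D: prob_space ?D by (rule prob_space_normal_density) (use s2 in simp)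
  interpret DD: pair_prob_space ?D ?D ..
  show "prob_space (distr (?D \<Otimes>\<^sub>M ?D) borel (\<lambda>(x, y). Complex x y))"
    by (rule DD.prob_space_distr) (unfold Complex_eq, measurable)
qed

lemma sets_CN[simp]: "sets (CN_gauss s) = sets borel"
  by (simp add: CN_gauss_def)

lemma comp_meas:
  "(\<lambda>x. fst x j) \<in> borel_measurable (PiM I (\<lambda>_. CN_gauss s) \<Otimes>\<^sub>M N)"
  "(\<lambda>x. snd x j) \<in> borel_measurable (N \<Otimes>\<^sub>M PiM I (\<lambda>_. CN_gauss s))"
  if "j \<in> I"
proof -
  have "(\<lambda>x. x j) \<in> PiM I (\<lambda>_. CN_gauss s) \<rightarrow>\<^sub>M CN_gauss s"
    by (rule measurable_component_singleton) (rule that)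
  then have *: "(\<lambda>x. x j) \<in> borel_measurable (PiM I (\<lambda>_. CN_gauss s))"
    by (simp only: measurable_cong_sets[OF refl sets_CN])
  show "(\<lambda>x. fst x j) \<in> borel_measurable (PiM I (\<lambda>_. CN_gauss s) \<Otimes>\<^sub>M N)"
    using measurable_compose[OF measurable_fst[of "PiM I (\<lambda>_. CN_gauss s)" N] *] by simp
  show "(\<lambda>x. snd x j) \<in> borel_measurable (N \<Otimes>\<^sub>M PiM I (\<lambda>_. CN_gauss s))"
    using measurable_compose[OF measurable_snd[of N "PiM I (\<lambda>_. CN_gauss s)"] *] by simp
qed

lemma meas_CN: "f \<in> borel_measurable borel \<Longrightarrow> f \<in> borel_measurable (CN_gauss s)"
  by (simp only: measurable_cong_sets[OF sets_CN refl])

lemma comp_CN: "i \<in> I \<Longrightarrow> g \<in> borel_measurable borel \<Longrightarrow> (\<lambda>x. g (x i)) \<in> borel_measurable (PiM I (\<lambda>_. CN_gauss s))"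
  by (rule measurable_compose[where N="CN_gauss s"]) (auto intro: meas_CN measurable_component_singleton)

lemma e2: "0 \<le> a \<Longrightarrow> 0 \<le> b \<Longrightarrow> 0 \<le> c \<Longrightarrow> 0 \<le> d \<Longrightarrow> a * b = c * d \<Longrightarrow> ennreal a * ennreal b = ennreal c * ennreal d"
  by (simp add: ennreal_mult[symmetric])

definition nb :: "real^('m::finite \<times> bool) \<Rightarrow> real" where
  "nb b = (\<Sum>i\<in>UNIV. sqrt ((b $ (i, True))\<^sup>2 + (b $ (i, False))\<^sup>2))"

lemma rayleigh_prob:
  assumes Pw: "Pw > 0" and s0: "\<sigma>0 > 0"
  shows "prob_space (rayleigh_bias Pw \<sigma>0 :: (real^('m::finite \<times> bool)) measure)"
proof -
  let ?M1 = "PiM (UNIV::'m set) (\<lambda>_. CN_gauss 1)"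
  let ?M2 = "PiM (UNIV::'m set) (\<lambda>_. CN_gauss (\<sigma>0\<^sup>2))"
  define F :: "('m \<Rightarrow> complex) \<times> ('m \<Rightarrow> complex) \<Rightarrow> real^('m \<times> bool)"
    where "F = (\<lambda>(h, nz). \<chi> ib. (if snd ib then Re else Im) (nz (fst ib) / (complex_of_real (sqrt Pw) * h (fst ib))))"
  have s02: "\<sigma>0\<^sup>2 > 0" using s0 by simp
  interpret M1: prob_space ?M1 by (rule prob_space_PiM) (rule prob_space_CN, simp)
  interpret M2: prob_space ?M2 by (rule prob_space_PiM) (rule prob_space_CN, rule s02)
  interpret M12: pair_prob_space ?M1 ?M2 ..
  have c1[measurable]: "(\<lambda>x. fst x j) \<in> borel_measurable (?M1 \<Otimes>\<^sub>M ?M2)" for j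
    by (rule comp_meas) simp
  have c2[measurable]: "(\<lambda>x. snd x j) \<in> borel_measurable (?M1 \<Otimes>\<^sub>M ?M2)" for j
    by (rule comp_meas) simp
  have Fm: "F \<in> borel_measurable (?M1 \<Otimes>\<^sub>M ?M2)"
    unfolding F_def
  proof (rule borel_measurable_vec_real)
    fix ib :: "'m \<times> bool"
    show "(\<lambda>x. (case x of (h, nz) \<Rightarrow> \<chi> ib. (if snd ib then Re else Im) (nz (fst ib) / (complex_of_real (sqrt Pw) * h (fst ib)))) $ ib)
        \<in> borel_measurable (?M1 \<Otimes>\<^sub>M ?M2)"
      by (cases "snd ib") (simp_all add: case_prod_beta)
  qed
  show ?thesis unfolding rayleigh_bias_def F_def[symmetric] by (rule M12.prob_space_distr[OF Fm])
qed

lemma rayleigh_nb: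
  assumes Pw: "Pw > 0" and s0: "\<sigma>0 > 0"
  shows "(\<integral>\<^sup>+b. ennreal (nb b) \<partial>(rayleigh_bias Pw \<sigma>0 :: (real^('m::finite \<times> bool)) measure))
     = ennreal (real CARD('m) * (pi * \<sigma>0 / (2 * sqrt Pw)))"
proof -
  let ?M1 = "PiM (UNIV::'m set) (\<lambda>_. CN_gauss 1)"
  let ?M2 = "PiM (UNIV::'m set) (\<lambda>_. CN_gauss (\<sigma>0\<^sup>2))"
  define F :: "('m \<Rightarrow> complex) \<times> ('m \<Rightarrow> complex) \<Rightarrow> real^('m \<times> bool)"
    where "F = (\<lambda>(h, nz). \<chi> ib. (if snd ib then Re else Im) (nz (fst ib) / (complex_of_real (sqrt Pw) * h (fst ib))))"
  have s02: "\<sigma>0\<^sup>2 > 0" using s0 by simp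
  interpret M1: prob_space ?M1 by (rule prob_space_PiM) (rule prob_space_CN, simp)
  interpret M2: prob_space ?M2 by (rule prob_space_PiM) (rule prob_space_CN, rule s02)
  interpret M12: pair_prob_space ?M1 ?M2 ..
  have c1[measurable]: "(\<lambda>x. fst x j) \<in> borel_measurable (?M1 \<Otimes>\<^sub>M ?M2)" for j
    by (rule comp_meas) simp
  have c2[measurable]: "(\<lambda>x. snd x j) \<in> borel_measurable (?M1 \<Otimes>\<^sub>M ?M2)" for j
    by (rule comp_meas) simp
  have Fm: "F \<in> borel_measurable (?M1 \<Otimes>\<^sub>M ?M2)"
    unfolding F_def
  proof (rule borel_measurable_vec_real)
    fix ib :: "'m \<times> bool"
    show "(\<lambda>x. (case x of (h, nz) \<Rightarrow> \<chi> ib. (if snd ib then Re else Im) (nz (fst ib) / (complex_of_real (sqrt Pw) * h (fst ib)))) $ ib)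
        \<in> borel_measurable (?M1 \<Otimes>\<^sub>M ?M2)"
      by (cases "snd ib") (simp_all add: case_prod_beta)
  qed
  have nbF: "nb (F p) = (\<Sum>i\<in>UNIV. cmod (snd p i) * (1 / cmod (fst p i)) / sqrt Pw)" for p
    unfolding nb_def F_def
    using Pw by (intro sum.cong refl) (simp add: case_prod_beta cmod_def[symmetric] norm_divide norm_mult)
  have nbm: "(\<lambda>b. ennreal (nb b)) \<in> borel_measurable borel"
    unfolding nb_def by measurable
  have per: "(\<integral>\<^sup>+p. ennreal (cmod (snd p i) * (1 / cmod (fst p i)) / sqrt Pw) \<partial>(?M1 \<Otimes>\<^sub>M ?M2))
      = ennreal (pi * \<sigma>0 / (2 * sqrt Pw))" for i
  proof -
    have "(\<integral>\<^sup>+p. ennreal (cmod (snd p i) * (1 / cmod (fst p i)) / sqrt Pw) \<partial>(?M1 \<Otimes>\<^sub>M ?M2))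
        = (\<integral>\<^sup>+h. \<integral>\<^sup>+nz. ennreal (1 / cmod (h i) / sqrt Pw) * ennreal (cmod (nz i)) \<partial>?M2 \<partial>?M1)"
    proof (subst M2.nn_integral_fst[symmetric])
      show "(\<lambda>p. ennreal (cmod (snd p i) * (1 / cmod (fst p i)) / sqrt Pw)) \<in> borel_measurable (?M1 \<Otimes>\<^sub>M ?M2)"
        by measurable
      show "(\<integral>\<^sup>+h. \<integral>\<^sup>+nz. ennreal (cmod (snd (h, nz) i) * (1 / cmod (fst (h, nz) i)) / sqrt Pw) \<partial>?M2 \<partial>?M1)
          = (\<integral>\<^sup>+h. \<integral>\<^sup>+nz. ennreal (1 / cmod (h i) / sqrt Pw) * ennreal (cmod (nz i)) \<partial>?M2 \<partial>?M1)"
        using Pw by (intro nn_integral_cong) (simp add: ennreal_mult[symmetric] mult.commute)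
    qed
    also have "\<dots> = (\<integral>\<^sup>+h. ennreal (1 / cmod (h i) / sqrt Pw) * ennreal (sqrt (2 * pi) * sqrt (\<sigma>0\<^sup>2 / 2) / 2) \<partial>?M1)"
    proof (intro nn_integral_cong)
      fix h :: "'m \<Rightarrow> complex"
      have "(\<integral>\<^sup>+nz. ennreal (cmod (nz i)) \<partial>?M2) = ennreal (sqrt (2 * pi) * sqrt (\<sigma>0\<^sup>2 / 2) / 2)"
        by (subst PiM_marg_nn[where f="\<lambda>z. ennreal (cmod z)"]) (auto intro!: prob_space_CN s02 meas_CN simp: CN_abs[OF s02])
      then show "(\<integral>\<^sup>+nz. ennreal (1 / cmod (h i) / sqrt Pw) * ennreal (cmod (nz i)) \<partial>?M2)
          = ennreal (1 / cmod (h i) / sqrt Pw) * ennreal (sqrt (2 * pi) * sqrt (\<sigma>0\<^sup>2 / 2) / 2)"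
        by (subst nn_integral_cmult)
           (auto intro!: comp_CN)
    qed
    also have "\<dots> = ennreal (1 / sqrt Pw * (sqrt (2 * pi) * sqrt (\<sigma>0\<^sup>2 / 2) / 2)) * ennreal (sqrt (2 * pi) / (2 * sqrt (1 / 2)))"
    proof -
      have "(\<integral>\<^sup>+h. ennreal (1 / cmod (h i)) \<partial>?M1) = ennreal (sqrt (2 * pi) / (2 * sqrt (1 / 2)))"
        by (subst PiM_marg_nn[where f="\<lambda>z. ennreal (1 / cmod z)"]) (auto intro!: prob_space_CN meas_CN simp: CN_inv)
      moreover have "(\<integral>\<^sup>+h. ennreal (1 / cmod (h i) / sqrt Pw) * ennreal (sqrt (2 * pi) * sqrt (\<sigma>0\<^sup>2 / 2) / 2) \<partial>?M1)
         = ennreal (1 / sqrt Pw * (sqrt (2 * pi) * sqrt (\<sigma>0\<^sup>2 / 2) / 2)) * (\<integral>\<^sup>+h. ennreal (1 / cmod (h i)) \<partial>?M1)"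
        by (subst nn_integral_cmult[symmetric])
           (auto intro!: nn_integral_cong comp_CN e2 simp: Pw less_imp_le)
      ultimately show ?thesis by simp
    qed
    also have "\<dots> = ennreal (pi * \<sigma>0 / (2 * sqrt Pw))"
    proof -
      have a: "sqrt (\<sigma>0\<^sup>2 / 2) = \<sigma>0 / sqrt 2" using s0 by (simp add: real_sqrt_divide)
      have b: "sqrt (1 / 2) = 1 / sqrt 2" by (simp add: real_sqrt_divide)
      have c: "sqrt (2 * pi) * sqrt (2 * pi) = 2 * pi" by simp
      have "1 / sqrt Pw * (sqrt (2 * pi) * sqrt (\<sigma>0\<^sup>2 / 2) / 2) * (sqrt (2 * pi) / (2 * sqrt (1 / 2)))
          = pi * \<sigma>0 / (2 * sqrt Pw)"
        unfolding a b using c Pw by (simp add: field_simps)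
      then show ?thesis using Pw s0 by (simp add: ennreal_mult[symmetric])
    qed
    finally show ?thesis .
  qed
  have "(\<integral>\<^sup>+b. ennreal (nb b) \<partial>(rayleigh_bias Pw \<sigma>0 :: (real^('m::finite \<times> bool)) measure))
      = (\<integral>\<^sup>+p. ennreal (nb (F p)) \<partial>(?M1 \<Otimes>\<^sub>M ?M2))"
    unfolding rayleigh_bias_def F_def[symmetric] by (rule nn_integral_distr[OF Fm]) (use nbm in simp)
  also have "\<dots> = (\<integral>\<^sup>+p. (\<Sum>i\<in>UNIV. ennreal (cmod (snd p i) * (1 / cmod (fst p i)) / sqrt Pw)) \<partial>(?M1 \<Otimes>\<^sub>M ?M2))"
    unfolding nbF using Pw by (subst sum_ennreal) auto
  also have "\<dots> = (\<Sum>i\<in>UNIV. (\<integral>\<^sup>+p. ennreal (cmod (snd p i) * (1 / cmod (fst p i)) / sqrt Pw) \<partial>(?M1 \<Otimes>\<^sub>M ?M2)))"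
    by (rule nn_integral_sum) simp
  also have "\<dots> = ennreal (real CARD('m) * (pi * \<sigma>0 / (2 * sqrt Pw)))"
    unfolding per using Pw s0 by (simp add: sum_ennreal ennreal_of_nat_eq_real_of_nat ennreal_mult[symmetric])
  finally show ?thesis .
qed

lemma pos_neg_finite:
  assumes "integrable M f"
  shows "(\<integral>\<^sup>+x. ennreal (f x) \<partial>M) < \<infinity>" "(\<integral>\<^sup>+x. ennreal (- f x) \<partial>M) < \<infinity>"
proof -
  have n: "(\<integral>\<^sup>+x. ennreal (norm (f x)) \<partial>M) < \<infinity>" using assms by (simp add: integrable_iff_bounded)
  show "(\<integral>\<^sup>+x. ennreal (f x) \<partial>M) < \<infinity>"
    by (rule le_less_trans[OF nn_integral_mono n]) (simp add: ennreal_leI)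
  show "(\<integral>\<^sup>+x. ennreal (- f x) \<partial>M) < \<infinity>"
    by (rule le_less_trans[OF nn_integral_mono n]) (simp add: ennreal_leI)
qed

lemma ext_integrable:
  assumes "integrable M f"
  shows "ext_integral M f = ereal (\<integral>x. f x \<partial>M)"
proof -
  note a = pos_neg_finite[OF assms]
  obtain u where u: "(\<integral>\<^sup>+x. ennreal (f x) \<partial>M) = ennreal u" "u \<ge> 0"
    using a(1) by (cases "(\<integral>\<^sup>+x. ennreal (f x) \<partial>M)" rule: ennreal_cases) auto
  obtain v where v: "(\<integral>\<^sup>+x. ennreal (- f x) \<partial>M) = ennreal v" "v \<ge> 0"
    using a(2) by (cases "(\<integral>\<^sup>+x. ennreal (- f x) \<partial>M)" rule: ennreal_cases) auto
  show ?thesis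
    unfolding ext_integral_def real_lebesgue_integral_def[OF assms] u v
    by (simp add: enn2ereal_ennreal u(2) v(2))
qed

lemma ext_mono:
  assumes "integrable M R" "\<And>x. x \<in> space M \<Longrightarrow> v x \<le> R x"
  shows "ext_integral M v \<le> ereal (\<integral>x. R x \<partial>M)"
proof -
  have "ext_integral M v \<le> ext_integral M R"
    unfolding ext_integral_def
  proof (rule ereal_minus_mono)
    show "enn2ereal (\<integral>\<^sup>+x. ennreal (v x) \<partial>M) \<le> enn2ereal (\<integral>\<^sup>+x. ennreal (R x) \<partial>M)"
      using assms(2) by (auto intro!: nn_integral_mono ennreal_leI simp: less_eq_ennreal.rep_eq[symmetric])
    show "enn2ereal (\<integral>\<^sup>+x. ennreal (- R x) \<partial>M) \<le> enn2ereal (\<integral>\<^sup>+x. ennreal (- v x) \<partial>M)"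
      using assms(2) by (auto intro!: nn_integral_mono ennreal_leI simp: less_eq_ennreal.rep_eq[symmetric])
  qed
  then show ?thesis using ext_integrable[OF assms(1)] by simp
qed

lemma DV:
  assumes Q: "prob_space Q" and Pp: "prob_space P" and sets: "sets P = sets Q"
    and ac: "absolutely_continuous Q P"
    and fm: "f \<in> borel_measurable Q"
    and Z: "(\<integral>\<^sup>+x. ennreal (exp (f x)) \<partial>Q) = ennreal z"
    and KL: "KL_div P Q \<noteq> \<infinity>"
  shows "\<exists>r. integrable P r \<and> (\<forall>x. f x \<le> r x) \<and>
     KL_div P Q = ereal (\<integral>x. ln (enn2real (RN_deriv Q P x)) \<partial>P) \<and>
     (\<integral>x. r x \<partial>P) \<le> (\<integral>x. ln (enn2real (RN_deriv Q P x)) \<partial>P) + ln z"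
proof -
  interpret Q: prob_space Q by (rule Q)
  interpret P: prob_space P by (rule Pp)
  define D where "D = RN_deriv Q P"
  define p where "p x = enn2real (D x)" for x
  define lp where "lp x = ln (p x)" for x
  have Dm[measurable]: "D \<in> borel_measurable Q" unfolding D_def by simp
  have Pd: "P = density Q D"
    unfolding D_def using Q.density_RN_deriv[OF ac sets] by simp
  have meas_PQ: "borel_measurable P = borel_measurable Q"
    by (rule measurable_cong_sets[OF sets refl])
  have pm[measurable]: "p \<in> borel_measurable Q" unfolding p_def by measurable
  have lpm[measurable]: "lp \<in> borel_measurable Q" unfolding lp_def by measurable
  have pnn: "p x \<ge> 0" for x unfolding p_def by simp
  have zpos: "z > 0"
  proof (rule ccontr)
    assume "\<not> z > 0"
    then have "(\<integral>\<^sup>+x. ennreal (exp (f x)) \<partial>Q) = 0" using Z by (simp add: ennreal_eq_0_iff)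
    then have "AE x in Q. ennreal (exp (f x)) = 0"
      by (subst (asm) nn_integral_0_iff_AE) (use fm in auto)
    then have "AE x in Q. False" by simp
    then show False by simp
  qed
  have neg_pt: "ennreal (- lp x) \<le> ennreal (1 / p x)" for x
  proof (cases "p x > 0")
    case True
    have "- lp x = ln (1 / p x)" unfolding lp_def using True by (simp add: ln_div)
    also have "\<dots> \<le> 1 / p x - 1" by (rule ln_le_minus_one) (use True in simp)
    finally show ?thesis by (intro ennreal_leI) simp
  next
    case False
    then have "p x = 0" using pnn[of x] by simp
    then show ?thesis unfolding lp_def by simp
  qed
  have Dinv: "D x * ennreal (1 / p x) \<le> 1" for x
  proof (cases "D x" rule: ennreal_cases)
    case (real d)
    then show ?thesis unfolding p_def
      by (cases "d = 0") (simp_all add: ennreal_mult[symmetric])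
  next
    case top
    then show ?thesis unfolding p_def by simp
  qed
  have neg_fin: "(\<integral>\<^sup>+x. ennreal (- lp x) \<partial>P) \<le> 1"
  proof -
    have "(\<integral>\<^sup>+x. ennreal (- lp x) \<partial>P) \<le> (\<integral>\<^sup>+x. ennreal (1 / p x) \<partial>P)"
      by (intro nn_integral_mono neg_pt)
    also have "\<dots> = (\<integral>\<^sup>+x. D x * ennreal (1 / p x) \<partial>Q)"
      unfolding Pd by (rule nn_integral_density) auto
    also have "\<dots> \<le> (\<integral>\<^sup>+x. 1 \<partial>Q)"
      by (intro nn_integral_mono Dinv)
    also have "\<dots> = 1" by (simp add: Q.emeasure_space_1)
    finally show ?thesis .
  qed
  have KLe: "KL_div P Q = ext_integral P lp"
  proof -
    have "lp = (\<lambda>x. ln (enn2real (RN_deriv Q P x)))" by (auto simp: fun_eq_iff lp_def p_def D_def)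
    then show ?thesis unfolding KL_div_def using ac by simp
  qed
  have pos_fin: "(\<integral>\<^sup>+x. ennreal (lp x) \<partial>P) < \<infinity>"
  proof -
    have "(\<integral>\<^sup>+x. ennreal (lp x) \<partial>P) \<noteq> \<infinity>"
    proof
      assume "(\<integral>\<^sup>+x. ennreal (lp x) \<partial>P) = \<infinity>"
      then have "ext_integral P lp = \<infinity>" unfolding ext_integral_def by simp
      then show False using KL KLe by simp
    qed
    then show ?thesis by (simp add: less_top)
  qed
  have lpP: "lp \<in> borel_measurable P" unfolding meas_PQ by (rule lpm)
  have lp_int: "integrable P lp"
  proof (subst integrable_iff_bounded, intro conjI lpP)
    have "(\<integral>\<^sup>+x. ennreal (norm (lp x)) \<partial>P) = (\<integral>\<^sup>+x. ennreal (lp x) + ennreal (- lp x) \<partial>P)"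
      by (intro nn_integral_cong) (simp add: ennreal_neg abs_real_def)
    also have "\<dots> = (\<integral>\<^sup>+x. ennreal (lp x) \<partial>P) + (\<integral>\<^sup>+x. ennreal (- lp x) \<partial>P)"
      by (rule nn_integral_add) (use lpP in auto)
    also have "\<dots> < \<infinity>"
    proof -
      have "(\<integral>\<^sup>+x. ennreal (- lp x) \<partial>P) < \<infinity>" using neg_fin by (rule le_less_trans) simp
      then show ?thesis using pos_fin by (simp add: less_top ennreal_add_eq_top)
    qed
    finally show "(\<integral>\<^sup>+x. ennreal (norm (lp x)) \<partial>P) < \<infinity>" .
  qed
  have KLr: "KL_div P Q = ereal (\<integral>x. lp x \<partial>P)"
    using KLe ext_integrable[OF lp_int] by simp
  define q where "q x = exp (f x) / (p x * z)" for x
  have qm[measurable]: "q \<in> borel_measurable Q" unfolding q_def using fm by measurable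
  have qP: "q \<in> borel_measurable P" unfolding meas_PQ by (rule qm)
  have qnn: "q x \<ge> 0" for x unfolding q_def using pnn[of x] zpos by simp
  have Dq: "D x * ennreal (q x) \<le> ennreal (exp (f x) / z)" for x
  proof (cases "D x" rule: ennreal_cases)
    case (real d)
    show ?thesis
    proof (cases "d = 0")
      case False
      have e: "d * (exp (f x) / (d * z)) = exp (f x) / z" using False zpos by (simp add: field_simps)
      have "ennreal d * ennreal (exp (f x) / (d * z)) = ennreal (exp (f x) / z)"
      proof -
        have "ennreal (d * (exp (f x) / (d * z))) = ennreal d * ennreal (exp (f x) / (d * z))"
          by (rule ennreal_mult) (use real zpos in auto)
        then show ?thesis using e by simp
      qed
      then show ?thesis unfolding q_def p_def using real by simp
    qed (use real in \<open>simp add: q_def p_def\<close>)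
  next
    case top
    then show ?thesis unfolding q_def p_def by simp
  qed
  have q_nn: "(\<integral>\<^sup>+x. ennreal (q x) \<partial>P) \<le> 1"
  proof -
    have "(\<integral>\<^sup>+x. ennreal (q x) \<partial>P) = (\<integral>\<^sup>+x. D x * ennreal (q x) \<partial>Q)"
      unfolding Pd by (rule nn_integral_density) auto
    also have "\<dots> \<le> (\<integral>\<^sup>+x. ennreal (exp (f x)) * ennreal (1 / z) \<partial>Q)"
      by (intro nn_integral_mono) (use Dq zpos in \<open>simp add: ennreal_mult[symmetric]\<close>)
    also have "\<dots> = ennreal z * ennreal (1 / z)"
      by (subst nn_integral_multc) (use fm Z in auto)
    also have "\<dots> = 1" using zpos by (simp add: ennreal_mult[symmetric])
    finally show ?thesis .
  qed
  have q_int: "integrable P q"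
  proof (subst integrable_iff_bounded, intro conjI qP)
    have "(\<integral>\<^sup>+x. ennreal (norm (q x)) \<partial>P) = (\<integral>\<^sup>+x. ennreal (q x) \<partial>P)"
      using qnn by (intro nn_integral_cong) simp
    also have "\<dots> < \<infinity>" using q_nn by (rule le_less_trans) simp
    finally show "(\<integral>\<^sup>+x. ennreal (norm (q x)) \<partial>P) < \<infinity>" .
  qed
  have q_le: "(\<integral>x. q x \<partial>P) \<le> 1"
  proof -
    have "(\<integral>x. q x \<partial>P) = enn2real (\<integral>\<^sup>+x. ennreal (q x) \<partial>P)"
      by (rule integral_eq_nn_integral) (use qP qnn in auto)
    also have "\<dots> \<le> 1" using q_nn by (simp add: enn2real_leI)
    finally show ?thesis .
  qed
  have AEpos: "AE x in P. p x > 0"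
  proof -
    have sfP: "sigma_finite_measure P" by (rule P.sigma_finite_measure_axioms)
    have fin: "AE x in Q. D x \<noteq> \<infinity>"
      unfolding D_def by (rule Q.RN_deriv_finite[OF sfP ac sets])
    have "AE x in Q. 0 < D x \<longrightarrow> p x > 0"
      using fin by eventually_elim (auto simp: p_def enn2real_positive_iff less_top)
    then show ?thesis unfolding Pd by (subst AE_density[OF Dm])
  qed
  define r0 where "r0 x = lp x + ln z + q x - 1" for x
  define r where "r x = max (f x) (r0 x)" for x
  have fle: "f x \<le> r0 x" if "p x > 0" for x
  proof -
    have "f x - lp x - ln z = ln (exp (f x) / (p x * z))"
      unfolding lp_def using that zpos by (simp add: ln_div ln_mult)
    also have "\<dots> \<le> exp (f x) / (p x * z) - 1"
      by (rule ln_le_minus_one) (use that zpos in simp)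
    finally show ?thesis unfolding r0_def q_def by simp
  qed
  have r0m: "r0 \<in> borel_measurable P" unfolding r0_def using lpP qP by measurable
  have fP: "f \<in> borel_measurable P" unfolding meas_PQ by (rule fm)
  have rm: "r \<in> borel_measurable P" unfolding r_def using fP r0m by measurable
  have r0_int: "integrable P r0" unfolding r0_def using lp_int q_int by auto
  have AEr: "AE x in P. r x = r0 x"
    using AEpos by eventually_elim (auto simp: r_def fle max_def)
  have r_int: "integrable P r"
    using integrable_cong_AE[OF rm r0m AEr] r0_int by simp
  have "(\<integral>x. r x \<partial>P) = (\<integral>x. r0 x \<partial>P)"
    by (rule integral_cong_AE[OF rm r0m AEr])
  also have "\<dots> = (\<integral>x. lp x \<partial>P) + ln z + (\<integral>x. q x \<partial>P) - 1"
    unfolding r0_def using lp_int q_int by (simp add: P.prob_space)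
  also have "\<dots> \<le> (\<integral>x. lp x \<partial>P) + ln z" using q_le by simp
  finally have "(\<integral>x. r x \<partial>P) \<le> (\<integral>x. lp x \<partial>P) + ln z" .
  moreover have "\<forall>x. f x \<le> r x" by (simp add: r_def)
  moreover have "lp = (\<lambda>x. ln (enn2real (RN_deriv Q P x)))" by (auto simp: fun_eq_iff lp_def p_def D_def)
  ultimately show ?thesis using r_int KLr by auto
qed

lemma mgf_sample:
  fixes h :: "'z \<Rightarrow> real"
  assumes PZ: "prob_space PZ" and n: "n > 0" and hm: "h \<in> borel_measurable PZ"
    and mgf: "\<And>t. integrable PZ (\<lambda>z. exp (t * (h z - (\<integral>z'. h z' \<partial>PZ)))) \<and>
                   ln (\<integral>z. exp (t * (h z - (\<integral>z'. h z' \<partial>PZ))) \<partial>PZ) \<le> t\<^sup>2 * \<sigma>\<^sup>2 / 2"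
  shows "(\<integral>\<^sup>+S. ennreal (exp (k * ((\<integral>z. h z \<partial>PZ) - (\<Sum>i<n. h (S i)) / real n))) \<partial>PiM {..<n} (\<lambda>_. PZ))
         \<le> ennreal (exp (k\<^sup>2 * \<sigma>\<^sup>2 / (2 * real n)))"
proof -
  interpret PZ: prob_space PZ by (rule PZ)
  interpret PS: product_sigma_finite "\<lambda>_::nat. PZ"
    by (simp add: product_sigma_finite_def PZ.sigma_finite_measure_axioms)
  define L where "L = (\<integral>z. h z \<partial>PZ)"
  define t where "t = - (k / real n)"
  define E where "E = (\<integral>z. exp ((k / real n) * (L - h z)) \<partial>PZ)"
  have eq: "(\<lambda>z. exp ((k / real n) * (L - h z))) = (\<lambda>z. exp (t * (h z - L)))"
    by (intro ext arg_cong[where f=exp]) (simp only: t_def, argo)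
  have Eint: "integrable PZ (\<lambda>z. exp ((k / real n) * (L - h z)))"
    unfolding eq using mgf[of t] by (simp add: L_def)
  have Ele: "E \<le> exp ((k / real n)\<^sup>2 * \<sigma>\<^sup>2 / 2)"
  proof (cases "E > 0")
    case True
    have "ln E \<le> t\<^sup>2 * \<sigma>\<^sup>2 / 2" unfolding E_def eq using mgf[of t] by (simp add: L_def)
    then have "exp (ln E) \<le> exp (t\<^sup>2 * \<sigma>\<^sup>2 / 2)" by (simp only: exp_le_cancel_iff)
    then have "E \<le> exp (t\<^sup>2 * \<sigma>\<^sup>2 / 2)" using True by simp
    then show ?thesis by (simp add: t_def)
  next
    case False
    then show ?thesis using exp_gt_zero[of "(k / real n)\<^sup>2 * \<sigma>\<^sup>2 / 2"] by linarith
  qed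
  have Enn: "(\<integral>\<^sup>+z. ennreal (exp ((k / real n) * (L - h z))) \<partial>PZ) = ennreal E"
    unfolding E_def by (rule nn_integral_eq_integral[OF Eint]) simp
  have pt: "exp (k * (L - (\<Sum>i<n. h (S i)) / real n)) = (\<Prod>i<n. exp ((k / real n) * (L - h (S i))))" for S
  proof -
    have "(\<Sum>i<n. (k / real n) * (L - h (S i))) = k * (L - (\<Sum>i<n. h (S i)) / real n)"
    proof -
      have "(\<Sum>i<n. (k / real n) * (L - h (S i))) = (k / real n) * (\<Sum>i<n. (L - h (S i)))"
        by (simp only: sum_distrib_left)
      also have "\<dots> = (k / real n) * (real n * L - (\<Sum>i<n. h (S i)))"
        by (simp add: sum_subtractf)
      also have "\<dots> = k * (L - (\<Sum>i<n. h (S i)) / real n)"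
        using n by (simp add: field_simps)
      finally show ?thesis .
    qed
    then show ?thesis by (simp add: exp_sum[symmetric])
  qed
  have "(\<integral>\<^sup>+S. ennreal (exp (k * (L - (\<Sum>i<n. h (S i)) / real n))) \<partial>PiM {..<n} (\<lambda>_. PZ))
      = (\<integral>\<^sup>+S. (\<Prod>i<n. ennreal (exp ((k / real n) * (L - h (S i))))) \<partial>PiM {..<n} (\<lambda>_. PZ))"
    unfolding pt by (subst prod_ennreal) auto
  also have "\<dots> = (\<Prod>i<n. (\<integral>\<^sup>+z. ennreal (exp ((k / real n) * (L - h z))) \<partial>PZ))"
    by (rule PS.product_nn_integral_prod) (use hm in auto)
  also have "\<dots> = ennreal (E ^ n)"
  proof -
    have E0: "E \<ge> 0" unfolding E_def by (simp add: integral_nonneg)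
    show ?thesis unfolding Enn using E0 by (simp add: ennreal_power)
  qed
  also have "\<dots> \<le> ennreal (exp ((k / real n)\<^sup>2 * \<sigma>\<^sup>2 / 2) ^ n)"
    by (intro ennreal_leI power_mono Ele) (simp add: E_def)
  also have "exp ((k / real n)\<^sup>2 * \<sigma>\<^sup>2 / 2) ^ n = exp (k\<^sup>2 * \<sigma>\<^sup>2 / (2 * real n))"
    using n by (simp add: exp_of_nat_mult[symmetric] power2_eq_square field_simps)
  finally show ?thesis by (simp add: L_def)
qed

lemma good_set:
  fixes l :: "'w \<Rightarrow> 'z \<Rightarrow> real"
  assumes PZ: "prob_space PZ" and n: "n > 0"
    and lm: "(\<lambda>(w, z). l w z) \<in> borel_measurable (Mw \<Otimes>\<^sub>M PZ)"
    and mgf: "\<And>w t. integrable PZ (\<lambda>z. exp (t * (l w z - (\<integral>z'. l w z' \<partial>PZ)))) \<and>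
                   ln (\<integral>z. exp (t * (l w z - (\<integral>z'. l w z' \<partial>PZ))) \<partial>PZ) \<le> t\<^sup>2 * \<sigma>\<^sup>2 / 2"
    and Q: "Q \<in> space (prob_algebra Mw)" and eps: "0 < \<epsilon>" "\<epsilon> < 1"
  shows "\<exists>A \<in> sets (PiM {..<n} (\<lambda>_. PZ)). emeasure (PiM {..<n} (\<lambda>_. PZ)) A \<ge> ennreal (1 - \<epsilon>) \<and>
     (\<forall>S\<in>A. (\<integral>\<^sup>+w. ennreal (exp (k * ((\<integral>z. l w z \<partial>PZ) - (\<Sum>i<n. l w (S i)) / real n))) \<partial>Q)
              \<le> ennreal (exp (k\<^sup>2 * \<sigma>\<^sup>2 / (2 * real n)) / \<epsilon>))"
proof -
  let ?SS = "PiM {..<n} (\<lambda>_. PZ)"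
  interpret PZ: prob_space PZ by (rule PZ)
  interpret SS: prob_space ?SS by (rule prob_space_PiM) (rule PZ)
  have sQ: "sets Q = sets Mw" and Qp: "prob_space Q" using Q by (auto simp: space_prob_algebra)
  interpret Q: prob_space Q by (rule Qp)
  interpret SQ: pair_prob_space ?SS Q ..
  define C where "C = exp (k\<^sup>2 * \<sigma>\<^sup>2 / (2 * real n))"
  have Cpos: "C > 0" unfolding C_def by simp
  define F where "F S w = ennreal (exp (k * ((\<integral>z. l w z \<partial>PZ) - (\<Sum>i<n. l w (S i)) / real n)))" for S w
  define X where "X S = (\<integral>\<^sup>+w. F S w \<partial>Q)" for S
  have Lm: "(\<lambda>w. \<integral>z. l w z \<partial>PZ) \<in> borel_measurable Mw"
    using PZ.borel_measurable_lebesgue_integral[of "\<lambda>w z. l w z" Mw] lm by simp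
  have li: "(\<lambda>p. l (snd p) (fst p i)) \<in> borel_measurable (?SS \<Otimes>\<^sub>M Mw)" if "i < n" for i
  proof -
    have c: "(\<lambda>p. fst p i) \<in> ?SS \<Otimes>\<^sub>M Mw \<rightarrow>\<^sub>M PZ"
      by (rule measurable_compose[OF measurable_fst measurable_component_singleton]) (use that in simp)
    have "(\<lambda>p. (snd p, fst p i)) \<in> ?SS \<Otimes>\<^sub>M Mw \<rightarrow>\<^sub>M Mw \<Otimes>\<^sub>M PZ"
      by (rule measurable_Pair[OF measurable_snd c])
    from measurable_compose[OF this lm] show ?thesis by simp
  qed
  have Fm': "(\<lambda>(S, w). F S w) \<in> borel_measurable (?SS \<Otimes>\<^sub>M Mw)"
  proof -
    have "(\<lambda>p. \<Sum>i<n. l (snd p) (fst p i)) \<in> borel_measurable (?SS \<Otimes>\<^sub>M Mw)"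
      by (rule borel_measurable_sum) (use li in simp)
    moreover have "(\<lambda>p. \<integral>z. l (snd p) z \<partial>PZ) \<in> borel_measurable (?SS \<Otimes>\<^sub>M Mw)"
      by (rule measurable_compose[OF measurable_snd Lm])
    ultimately show ?thesis unfolding F_def case_prod_beta by measurable
  qed
  have Fm: "(\<lambda>(S, w). F S w) \<in> borel_measurable (?SS \<Otimes>\<^sub>M Q)"
    using Fm' by (simp add: measurable_cong_sets[OF sets_pair_measure_cong[OF refl sQ] refl])
  have Xm: "X \<in> borel_measurable ?SS"
    unfolding X_def using Q.borel_measurable_nn_integral[OF Fm] by simp
  have intX: "(\<integral>\<^sup>+S. X S \<partial>?SS) \<le> ennreal C"
  proof -
    have "(\<integral>\<^sup>+S. X S \<partial>?SS) = (\<integral>\<^sup>+w. \<integral>\<^sup>+S. F S w \<partial>?SS \<partial>Q)"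
      unfolding X_def by (rule SQ.Fubini'[symmetric, OF Fm])
    also have "\<dots> \<le> (\<integral>\<^sup>+w. ennreal C \<partial>Q)"
    proof (rule nn_integral_mono)
      fix w assume "w \<in> space Q"
      then have "w \<in> space Mw" using sets_eq_imp_space_eq[OF sQ] by simp
      then have hm: "l w \<in> borel_measurable PZ"
        using measurable_Pair2[OF lm] by simp
      show "(\<integral>\<^sup>+S. F S w \<partial>?SS) \<le> ennreal C"
        unfolding F_def C_def by (rule mgf_sample[OF PZ n hm mgf])
    qed
    also have "\<dots> = ennreal C" by (simp add: Q.emeasure_space_1)
    finally show ?thesis .
  qed
  define B where "B = {S \<in> space ?SS. 1 \<le> ennreal (\<epsilon> / C) * X S}"
  have Bm: "B \<in> sets ?SS" unfolding B_def using Xm by measurable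
  have "emeasure ?SS B \<le> ennreal (\<epsilon> / C) * (\<integral>\<^sup>+S. X S * indicator (space ?SS) S \<partial>?SS)"
    unfolding B_def by (rule nn_integral_Markov_inequality) (use Xm in auto)
  also have "(\<integral>\<^sup>+S. X S * indicator (space ?SS) S \<partial>?SS) = (\<integral>\<^sup>+S. X S \<partial>?SS)"
    by (intro nn_integral_cong) simp
  finally have "emeasure ?SS B \<le> ennreal (\<epsilon> / C) * ennreal C"
    using intX by (meson mult_left_mono order_trans zero_le)
  also have "\<dots> = ennreal (\<epsilon> / C * C)"
    by (rule ennreal_mult[symmetric]) (use Cpos eps in auto)
  also have "\<dots> = ennreal \<epsilon>" using Cpos by simp
  finally have EB: "emeasure ?SS B \<le> ennreal \<epsilon>" .
  define A where "A = space ?SS - B"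
  have Am: "A \<in> sets ?SS" unfolding A_def using Bm by auto
  have "emeasure ?SS A = 1 - emeasure ?SS B"
    unfolding A_def using Bm by (subst emeasure_compl) (auto simp: SS.emeasure_space_1)
  also have "\<dots> \<ge> 1 - ennreal \<epsilon>" using EB by (rule ennreal_minus_mono[OF order_refl])
  finally have "emeasure ?SS A \<ge> ennreal (1 - \<epsilon>)" using eps by (simp add: ennreal_1[symmetric] ennreal_minus del: ennreal_1)
  moreover have "X S \<le> ennreal (C / \<epsilon>)" if "S \<in> A" for S
  proof -
    have lt: "ennreal (\<epsilon> / C) * X S < 1" using that unfolding A_def B_def by auto
    show ?thesis
    proof (cases "X S" rule: ennreal_cases)
      case (real x)
      have "ennreal (\<epsilon> / C * x) = ennreal (\<epsilon> / C) * ennreal x"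
        by (rule ennreal_mult) (use eps Cpos real in auto)
      then have "ennreal (\<epsilon> / C * x) < 1" using lt real by simp
      then have "\<epsilon> / C * x < 1" by (simp add: ennreal_less_iff)
      then have "x \<le> C / \<epsilon>" using eps Cpos by (simp add: field_simps)
      then show ?thesis using real by (simp add: ennreal_leI)
    next
      case top
      then show ?thesis using lt eps Cpos by (simp add: ennreal_mult_top)
    qed
  qed
  ultimately show ?thesis using Am unfolding X_def F_def C_def by blast
qed

lemma integrable_pair_sum:
  fixes a :: "'a \<Rightarrow> real" and b :: "'b \<Rightarrow> real"
  assumes M1: "prob_space M1" and M2: "prob_space M2"
    and ia: "integrable M1 a" and ib: "integrable M2 b"
  shows "integrable (M1 \<Otimes>\<^sub>M M2) (\<lambda>p. a (fst p) + b (snd p))"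
    and "(\<integral>p. a (fst p) + b (snd p) \<partial>(M1 \<Otimes>\<^sub>M M2)) = (\<integral>x. a x \<partial>M1) + (\<integral>y. b y \<partial>M2)"
proof -
  interpret M1: prob_space M1 by (rule M1)
  interpret M2: prob_space M2 by (rule M2)
  interpret M12: pair_prob_space M1 M2 ..
  have am[measurable]: "a \<in> borel_measurable M1" using ia by simp
  have bm[measurable]: "b \<in> borel_measurable M2" using ib by simp
  have i1: "integrable (M1 \<Otimes>\<^sub>M M2) (\<lambda>p. a (fst p))"
  proof (subst integrable_iff_bounded, intro conjI)
    show "(\<lambda>p. a (fst p)) \<in> borel_measurable (M1 \<Otimes>\<^sub>M M2)" by measurable
    have "(\<integral>\<^sup>+p. ennreal (norm (a (fst p))) \<partial>(M1 \<Otimes>\<^sub>M M2)) = (\<integral>\<^sup>+x. \<integral>\<^sup>+y. ennreal (norm (a x)) \<partial>M2 \<partial>M1)"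
      by (subst M2.nn_integral_fst[symmetric]) (auto)
    also have "\<dots> = (\<integral>\<^sup>+x. ennreal (norm (a x)) \<partial>M1)" by (simp add: M2.emeasure_space_1)
    also have "\<dots> < \<infinity>" using ia by (simp add: integrable_iff_bounded)
    finally show "(\<integral>\<^sup>+p. ennreal (norm (a (fst p))) \<partial>(M1 \<Otimes>\<^sub>M M2)) < \<infinity>" .
  qed
  have i2: "integrable (M1 \<Otimes>\<^sub>M M2) (\<lambda>p. b (snd p))"
  proof (subst integrable_iff_bounded, intro conjI)
    show "(\<lambda>p. b (snd p)) \<in> borel_measurable (M1 \<Otimes>\<^sub>M M2)" by measurable
    have "(\<integral>\<^sup>+p. ennreal (norm (b (snd p))) \<partial>(M1 \<Otimes>\<^sub>M M2)) = (\<integral>\<^sup>+x. \<integral>\<^sup>+y. ennreal (norm (b y)) \<partial>M2 \<partial>M1)"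
      by (subst M2.nn_integral_fst[symmetric]) (auto)
    also have "\<dots> = (\<integral>\<^sup>+y. ennreal (norm (b y)) \<partial>M2)" by (simp add: M1.emeasure_space_1)
    also have "\<dots> < \<infinity>" using ib by (simp add: integrable_iff_bounded)
    finally show "(\<integral>\<^sup>+p. ennreal (norm (b (snd p))) \<partial>(M1 \<Otimes>\<^sub>M M2)) < \<infinity>" .
  qed
  show i: "integrable (M1 \<Otimes>\<^sub>M M2) (\<lambda>p. a (fst p) + b (snd p))" using i1 i2 by simp
  have "(\<integral>p. a (fst p) + b (snd p) \<partial>(M1 \<Otimes>\<^sub>M M2)) = (\<integral>x. \<integral>y. a x + b y \<partial>M2 \<partial>M1)"
    using M12.integral_fst'[OF i] by simp
  also have "\<dots> = (\<integral>x. a x + (\<integral>y. b y \<partial>M2) \<partial>M1)"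
    using ib by (intro Bochner_Integration.integral_cong) (simp_all add: M2.prob_space)
  also have "\<dots> = (\<integral>x. a x \<partial>M1) + (\<integral>y. b y \<partial>M2)"
    using ia by (simp add: M1.prob_space)
  finally show "(\<integral>p. a (fst p) + b (snd p) \<partial>(M1 \<Otimes>\<^sub>M M2)) = (\<integral>x. a x \<partial>M1) + (\<integral>y. b y \<partial>M2)" .
qed

lemma ext_distr:
  assumes T: "T \<in> M \<rightarrow>\<^sub>M N" and u: "u \<in> borel_measurable N"
  shows "ext_integral (distr M N T) u = ext_integral M (\<lambda>x. u (T x))"
  unfolding ext_integral_def using T u by (simp add: nn_integral_distr)

theorem mainTheorem4:
  fixes PZ :: "'z measure" and n :: nat
    and Mw :: "'w measure" and dW :: "'w \<Rightarrow> 'w \<Rightarrow> real"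
    and dM :: "real^('m::finite \<times> bool)^('m \<times> bool) \<Rightarrow> real^('m \<times> bool)^('m \<times> bool) \<Rightarrow> real"
    and loss :: "('w, 'm) fullw \<Rightarrow> 'z \<Rightarrow> real"
    and PWS :: "(nat \<Rightarrow> 'z) \<Rightarrow> 'w measure"
    and \<sigma> K Pw \<sigma>0 :: real
  assumes PZ: "prob_space PZ" and n: "n > 0"
    and alg: "PWS \<in> measurable (sample_space PZ n) (prob_algebra Mw)"
    and dW: "is_metric dW" and dM: "is_metric dM"
    and loss_meas: "(\<lambda>(w, z). loss w z) \<in> borel_measurable (full_space Mw \<Otimes>\<^sub>M PZ)"
    and loss_nonneg: "\<And>w z. loss w z \<ge> 0"
    and subg: "sub_gaussian_loss PZ loss \<sigma>"
    and lip: "lipschitz_loss (full_metric dW dM) loss K"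
    and Pw: "Pw > 0" and \<sigma>0: "\<sigma>0 > 0"
  shows "\<forall>Q \<in> space (prob_algebra Mw). \<forall>k > 0. \<forall>\<epsilon>. 0 < \<epsilon> \<and> \<epsilon> < 1 \<longrightarrow>
    (\<exists>A \<in> sets (sample_space PZ n).
       emeasure (sample_space PZ n) A \<ge> ennreal (1 - \<epsilon>) \<and>
       (\<forall>S \<in> A.
          wireless_gen_err PZ loss n S Mw (PWS S) Pw \<sigma>0
          \<le> ereal (k * \<sigma>\<^sup>2 / (2 * real n))
            + (KL_div (PWS S) Q - ereal (ln \<epsilon>)) / ereal k
            + ereal (real (2 * CARD('m)) * pi * K / (4 * sqrt (Pw / \<sigma>0\<^sup>2))
                     + real (2 * CARD('m)) / (2 * k) * ln (pi\<^sup>2 / 8))))"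
proof (intro ballI allI impI)
  fix Q and k \<epsilon> :: real
  assume Q: "Q \<in> space (prob_algebra Mw)" and k: "k > 0" and eps: "0 < \<epsilon> \<and> \<epsilon> < 1"
  interpret PZ: prob_space PZ by (rule PZ)
  define w0 :: "'w \<Rightarrow> ('w, 'm) fullw" where "w0 w = (w, (mat 1, 0))" for w
  define l where "l w z = loss (w0 w) z" for w z
  have w0m: "w0 \<in> Mw \<rightarrow>\<^sub>M full_space Mw"
    unfolding w0_def full_space_def by measurable
  have lm: "(\<lambda>(w, z). l w z) \<in> borel_measurable (Mw \<Otimes>\<^sub>M PZ)"
  proof -
    have "(\<lambda>p. (w0 (fst p), snd p)) \<in> Mw \<Otimes>\<^sub>M PZ \<rightarrow>\<^sub>M full_space Mw \<Otimes>\<^sub>M PZ"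
      by (rule measurable_Pair[OF measurable_compose[OF measurable_fst w0m] measurable_snd])
    from measurable_compose[OF this loss_meas] show ?thesis
      unfolding l_def by (simp add: case_prod_beta)
  qed
  have mgf: "integrable PZ (\<lambda>z. exp (t * (l w z - (\<integral>z'. l w z' \<partial>PZ)))) \<and>
             ln (\<integral>z. exp (t * (l w z - (\<integral>z'. l w z' \<partial>PZ))) \<partial>PZ) \<le> t\<^sup>2 * \<sigma>\<^sup>2 / 2" for w t
    using subg unfolding sub_gaussian_loss_def l_def by blast
  obtain A where Am: "A \<in> sets (PiM {..<n} (\<lambda>_. PZ))"
    and Ameas: "emeasure (PiM {..<n} (\<lambda>_. PZ)) A \<ge> ennreal (1 - \<epsilon>)"
    and AX: "\<And>S. S \<in> A \<Longrightarrow> (\<integral>\<^sup>+w. ennreal (exp (k * ((\<integral>z. l w z \<partial>PZ) - (\<Sum>i<n. l w (S i)) / real n))) \<partial>Q)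
              \<le> ennreal (exp (k\<^sup>2 * \<sigma>\<^sup>2 / (2 * real n)) / \<epsilon>)"
    using good_set[OF PZ n lm mgf Q, of \<epsilon> k] eps by blast
  show "\<exists>A \<in> sets (sample_space PZ n).
       emeasure (sample_space PZ n) A \<ge> ennreal (1 - \<epsilon>) \<and>
       (\<forall>S \<in> A.
          wireless_gen_err PZ loss n S Mw (PWS S) Pw \<sigma>0
          \<le> ereal (k * \<sigma>\<^sup>2 / (2 * real n))
            + (KL_div (PWS S) Q - ereal (ln \<epsilon>)) / ereal k
            + ereal (real (2 * CARD('m)) * pi * K / (4 * sqrt (Pw / \<sigma>0\<^sup>2))
                     + real (2 * CARD('m)) / (2 * k) * ln (pi\<^sup>2 / 8)))"
  proof (intro bexI[of _ A] conjI ballI)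
    show "A \<in> sets (sample_space PZ n)" using Am by (simp add: sample_space_def)
    show "emeasure (sample_space PZ n) A \<ge> ennreal (1 - \<epsilon>)" using Ameas by (simp add: sample_space_def)
    fix S assume SA: "S \<in> A"
    show "wireless_gen_err PZ loss n S Mw (PWS S) Pw \<sigma>0
          \<le> ereal (k * \<sigma>\<^sup>2 / (2 * real n))
            + (KL_div (PWS S) Q - ereal (ln \<epsilon>)) / ereal k
            + ereal (real (2 * CARD('m)) * pi * K / (4 * sqrt (Pw / \<sigma>0\<^sup>2))
                     + real (2 * CARD('m)) / (2 * k) * ln (pi\<^sup>2 / 8))"
    proof (cases "KL_div (PWS S) Q = \<infinity>")
      case True
      then show ?thesis using k by simp
    next
      case False
      let ?SS = "PiM {..<n} (\<lambda>_. PZ)"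
      have hS: "S \<in> space ?SS" using SA Am sets.sets_into_space by blast
      have Si: "S i \<in> space PZ" if "i < n" for i using hS that by (auto simp: space_PiM PiE_iff)
      have PS: "PWS S \<in> space (prob_algebra Mw)"
        using measurable_space[OF alg] hS by (simp add: sample_space_def)
      have sP: "sets (PWS S) = sets Mw" and Pp: "prob_space (PWS S)" using PS by (auto simp: space_prob_algebra)
      have sQ: "sets Q = sets Mw" and Qp: "prob_space Q" using Q by (auto simp: space_prob_algebra)
      interpret P: prob_space "PWS S" by (rule Pp)
      interpret Qs: prob_space Q by (rule Qp)
      have sPQ: "sets (PWS S) = sets Q" using sP sQ by simp
      have ac: "absolutely_continuous Q (PWS S)"
        using False unfolding KL_div_def by (auto split: if_splits)
      define C where "C = exp (k\<^sup>2 * \<sigma>\<^sup>2 / (2 * real n))"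
      define g where "g w = (\<integral>z. l w z \<partial>PZ) - (\<Sum>i<n. l w (S i)) / real n" for w
      have gpop: "g w = pop_risk PZ loss (w0 w) - emp_risk loss n S (w0 w)" for w
        unfolding g_def pop_risk_def emp_risk_def l_def by simp
      have XA: "(\<integral>\<^sup>+w. ennreal (exp (k * g w)) \<partial>Q) \<le> ennreal (C / \<epsilon>)"
        using AX[OF SA] unfolding g_def C_def by simp
      then obtain z where Z: "(\<integral>\<^sup>+w. ennreal (exp (k * g w)) \<partial>Q) = ennreal z" and z0: "z \<ge> 0" and zle: "z \<le> C / \<epsilon>"
      proof (cases "(\<integral>\<^sup>+w. ennreal (exp (k * g w)) \<partial>Q)" rule: ennreal_cases)
        case (real x)
        have C0: "C / \<epsilon> \<ge> 0" using eps unfolding C_def by simp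
        have "x \<le> C / \<epsilon>" using XA real C0 by (simp add: ennreal_le_iff)
        then show ?thesis using that[of x] real by simp
      next
        case top
        then show ?thesis using XA by (simp add: top_unique)
      qed
      have Lm: "(\<lambda>w. \<integral>z. l w z \<partial>PZ) \<in> borel_measurable Mw"
        using PZ.borel_measurable_lebesgue_integral[of "\<lambda>w z. l w z" Mw] lm by simp
      have lSi: "(\<lambda>w. l w (S i)) \<in> borel_measurable Mw" if "i < n" for i
        using measurable_Pair1[OF lm Si[OF that]] by simp
      have gm: "g \<in> borel_measurable Mw"
        unfolding g_def using Lm lSi by (intro borel_measurable_diff borel_measurable_divide borel_measurable_sum) auto
      have fm: "(\<lambda>w. k * g w) \<in> borel_measurable Q"
        using gm by (simp add: measurable_cong_sets[OF sQ refl])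
      obtain r where rint: "integrable (PWS S) r" and fr: "\<And>w. k * g w \<le> r w"
        and KLr: "KL_div (PWS S) Q = ereal (\<integral>x. ln (enn2real (RN_deriv Q (PWS S) x)) \<partial>PWS S)"
        and rle: "(\<integral>x. r x \<partial>PWS S) \<le> (\<integral>x. ln (enn2real (RN_deriv Q (PWS S) x)) \<partial>PWS S) + ln z"
        using DV[OF Qp Pp sPQ ac fm Z False] by blast
      define \<rho> where "\<rho> = (rayleigh_bias Pw \<sigma>0 :: (real^('m \<times> bool)) measure)"
      have \<rho>p: "prob_space \<rho>" unfolding \<rho>_def by (rule rayleigh_prob[OF Pw \<sigma>0])
      have s\<rho>: "sets \<rho> = sets borel" unfolding \<rho>_def rayleigh_bias_def by simp
      have nbm: "nb \<in> borel_measurable \<rho>"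
        unfolding measurable_cong_sets[OF s\<rho> refl] nb_def by measurable
      define Enb where "Enb = real CARD('m) * (pi * \<sigma>0 / (2 * sqrt Pw))"
      have nbhas: "has_bochner_integral \<rho> nb Enb"
        by (rule has_bochner_integral_nn_integral[OF nbm])
           (use Pw \<sigma>0 rayleigh_nb[OF Pw \<sigma>0] in \<open>auto simp: Enb_def \<rho>_def nb_def intro!: sum_nonneg\<close>)
      have nbint: "integrable \<rho> nb" and nbval: "(\<integral>b. nb b \<partial>\<rho>) = Enb"
        using nbhas by (auto simp: has_bochner_integral_iff)
      have lossint: "integrable PZ (loss w)" for w using subg unfolding sub_gaussian_loss_def by blast
      have dWz: "dW w w = 0" for w using dW unfolding is_metric_def by blast
      have dMz: "dM m m = 0" for m using dM unfolding is_metric_def by blast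
      have Lip: "pop_risk PZ loss (w, (mat 1, b)) \<le> pop_risk PZ loss (w0 w) + K * nb b" for w b
      proof -
        have d: "full_metric dW dM (w, (mat 1, b)) (w0 w) = nb b"
          unfolding full_metric_def chan_metric_def w0_def nb_def by (simp add: dWz dMz)
        have pt: "loss (w, (mat 1, b)) z \<le> loss (w0 w) z + K * nb b" for z
        proof -
          have "\<bar>loss (w, (mat 1, b)) z - loss (w0 w) z\<bar> \<le> K * full_metric dW dM (w, (mat 1, b)) (w0 w)"
            using lip unfolding lipschitz_loss_def by blast
          then have "\<bar>loss (w, (mat 1, b)) z - loss (w0 w) z\<bar> \<le> K * nb b" unfolding d .
          then show ?thesis by linarith
        qed
        have "pop_risk PZ loss (w, (mat 1, b)) \<le> (\<integral>z. loss (w0 w) z + K * nb b \<partial>PZ)"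
          unfolding pop_risk_def by (rule integral_mono) (use lossint pt in auto)
        also have "\<dots> = pop_risk PZ loss (w0 w) + K * nb b"
          unfolding pop_risk_def using lossint by (simp add: PZ.prob_space)
        finally show ?thesis .
      qed
      define T :: "'w \<times> (real^('m \<times> bool)) \<Rightarrow> ('w, 'm) fullw \<times> ('w, 'm) fullw"
        where "T = (\<lambda>(w, b). ((w, (mat 1, b)), (w, (mat 1, 0))))"
      have Tm0: "T \<in> Mw \<Otimes>\<^sub>M borel \<rightarrow>\<^sub>M full_space Mw \<Otimes>\<^sub>M full_space Mw"
        unfolding T_def full_space_def by measurable
      have Tm: "T \<in> PWS S \<Otimes>\<^sub>M \<rho> \<rightarrow>\<^sub>M full_space Mw \<Otimes>\<^sub>M full_space Mw"
        using Tm0 by (simp add: measurable_cong_sets[OF sets_pair_measure_cong[OF sP s\<rho>] refl])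
      have popm: "pop_risk PZ loss \<in> borel_measurable (full_space Mw)"
        unfolding pop_risk_def[abs_def]
        using PZ.borel_measurable_lebesgue_integral[of "\<lambda>w z. loss w z" "full_space Mw"] loss_meas by simp
      have empm: "emp_risk loss n S \<in> borel_measurable (full_space Mw)"
      proof -
        have "(\<lambda>w. loss w (S i)) \<in> borel_measurable (full_space Mw)" if "i < n" for i
          using measurable_Pair1[OF loss_meas Si[OF that]] by simp
        then show ?thesis unfolding emp_risk_def[abs_def]
          by (intro borel_measurable_divide borel_measurable_sum) auto
      qed
      define u where "u = (\<lambda>(w' :: ('w, 'm) fullw, w :: ('w, 'm) fullw). pop_risk PZ loss w' - emp_risk loss n S w)"
      have um: "u \<in> borel_measurable (full_space Mw \<Otimes>\<^sub>M full_space Mw)"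
        unfolding u_def using popm empm by measurable
      have Delta: "wireless_gen_err PZ loss n S Mw (PWS S) Pw \<sigma>0 = ext_integral (PWS S \<Otimes>\<^sub>M \<rho>) (\<lambda>x. u (T x))"
        unfolding wireless_gen_err_def joint_deploy_def \<rho>_def[symmetric] T_def[symmetric] u_def[symmetric]
        by (rule ext_distr[OF Tm um])
      define R :: "'w \<times> (real^('m \<times> bool)) \<Rightarrow> real" where "R p = r (fst p) / k + K * nb (snd p)" for p
      have ri: "integrable (PWS S) (\<lambda>w. r w / k)" using rint by simp
      have ni: "integrable \<rho> (\<lambda>b. K * nb b)" using nbint by simp
      have Rint: "integrable (PWS S \<Otimes>\<^sub>M \<rho>) R"
        unfolding R_def[abs_def] by (rule integrable_pair_sum(1)[OF Pp \<rho>p ri ni])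
      have Rval: "(\<integral>p. R p \<partial>(PWS S \<Otimes>\<^sub>M \<rho>)) = (\<integral>w. r w \<partial>PWS S) / k + K * Enb"
        unfolding R_def[abs_def] integrable_pair_sum(2)[OF Pp \<rho>p ri ni] using nbval by simp
      have uR: "u (T p) \<le> R p" for p
      proof -
        obtain w b where p: "p = (w, b)" by (cases p)
        have "u (T p) = pop_risk PZ loss (w, (mat 1, b)) - emp_risk loss n S (w0 w)"
          unfolding p u_def T_def w0_def by simp
        also have "\<dots> \<le> g w + K * nb b" using Lip[of w b] gpop[of w] by simp
        also have "g w \<le> r w / k" using fr[of w] k by (simp add: field_simps)
        finally show ?thesis unfolding R_def p by simp
      qed
      have D1: "wireless_gen_err PZ loss n S Mw (PWS S) Pw \<sigma>0 \<le> ereal ((\<integral>w. r w \<partial>PWS S) / k + K * Enb)"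
        unfolding Delta Rval[symmetric] by (rule ext_mono[OF Rint uR])
      define I where "I = (\<integral>x. ln (enn2real (RN_deriv Q (PWS S) x)) \<partial>PWS S)"
      have C1: "C \<ge> 1" unfolding C_def by simp
      have Ce: "C / \<epsilon> \<ge> 1" using C1 eps by (simp add: field_simps)
      have lnCe: "ln (C / \<epsilon>) = k\<^sup>2 * \<sigma>\<^sup>2 / (2 * real n) - ln \<epsilon>"
        using eps C1 unfolding C_def by (simp add: ln_div)
      have lnz: "ln z \<le> ln (C / \<epsilon>)"
      proof (cases "z > 0")
        case True then show ?thesis using zle by simp
      next
        case False then have "z = 0" using z0 by simp
        then show ?thesis using Ce by simp
      qed
      have r1: "(\<integral>w. r w \<partial>PWS S) / k \<le> k * \<sigma>\<^sup>2 / (2 * real n) + (I - ln \<epsilon>) / k"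
      proof -
        have "(\<integral>w. r w \<partial>PWS S) \<le> I + k\<^sup>2 * \<sigma>\<^sup>2 / (2 * real n) - ln \<epsilon>"
          using rle lnz lnCe unfolding I_def by simp
        then have "(\<integral>w. r w \<partial>PWS S) / k \<le> (I + k\<^sup>2 * \<sigma>\<^sup>2 / (2 * real n) - ln \<epsilon>) / k"
          using k by (simp add: divide_right_mono)
        also have "\<dots> = k * \<sigma>\<^sup>2 / (2 * real n) + (I - ln \<epsilon>) / k"
          using k n by (simp add: field_simps power2_eq_square)
        finally show ?thesis .
      qed
      have KE: "K * Enb = real (2 * CARD('m)) * pi * K / (4 * sqrt (Pw / \<sigma>0\<^sup>2))"
      proof -
        have "sqrt (Pw / \<sigma>0\<^sup>2) = sqrt Pw / \<sigma>0" using \<sigma>0 by (simp add: real_sqrt_divide)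
        then show ?thesis unfolding Enb_def using \<sigma>0 Pw by (simp add: field_simps)
      qed
      have pi8: "ln (pi\<^sup>2 / 8) \<ge> 0"
      proof -
        have "pi\<^sup>2 \<ge> 3\<^sup>2" using pi_gt3 by (intro power_mono) auto
        then show ?thesis by simp
      qed
      have last: "real (2 * CARD('m)) / (2 * k) * ln (pi\<^sup>2 / 8) \<ge> 0"
        using pi8 k by simp
      have "(\<integral>w. r w \<partial>PWS S) / k + K * Enb \<le>
          k * \<sigma>\<^sup>2 / (2 * real n) + (I - ln \<epsilon>) / k
          + (real (2 * CARD('m)) * pi * K / (4 * sqrt (Pw / \<sigma>0\<^sup>2))
             + real (2 * CARD('m)) / (2 * k) * ln (pi\<^sup>2 / 8))"
        using r1 KE last by linarith
      then have "ereal ((\<integral>w. r w \<partial>PWS S) / k + K * Enb) \<le>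
          ereal (k * \<sigma>\<^sup>2 / (2 * real n)) + (KL_div (PWS S) Q - ereal (ln \<epsilon>)) / ereal k
          + ereal (real (2 * CARD('m)) * pi * K / (4 * sqrt (Pw / \<sigma>0\<^sup>2))
             + real (2 * CARD('m)) / (2 * k) * ln (pi\<^sup>2 / 8))"
        unfolding KLr I_def[symmetric] using k by simp
      with D1 show ?thesis by (rule order_trans)
    qed
  qed
qed

end
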